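(* Let $\mathcal T$ be an orbital category. The poset $\mathrm{wIndSys}_{\mathcal T}$ is a lattice; meets are given by intersections ($(\mathcal C\wedge\mathcal D)_V=\mathcal C_V\cap\mathcal D_V$), and the join of weak indexing systems $\mathcal C,\mathcal D$ is $$\mathcal C\vee\mathcal D=\bigcup_{n\in\mathbb N}\big(\widehat{\mathrm{Cl}}_{\mathcal C}\widehat{\mathrm{Cl}}_{\mathcal D}\big)^{n}(\mathcal C\cup\mathcal D),$$ where $(\widehat{\mathrm{Cl}}_{\mathcal C}\widehat{\mathrm{Cl}}_{\mathcal D})^n$ denotes the $2n$-fold alternating composite $\widehat{\mathrm{Cl}}_{\mathcal C}\widehat{\mathrm{Cl}}_{\mathcal D}\cdots\widehat{\mathrm{Cl}}_{\mathcal C}\widehat{\mathrm{Cl}}_{\mathcal D}$.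
   Context: For a small category $\mathcal T$, $\mathbb F_{\mathcal T}$ is the full subcategory of $\mathrm{Fun}(\mathcal T^{op},\mathrm{Set})$ on finite coproducts of representables; $\mathcal T$ is orbital if $\mathbb F_{\mathcal T}$ has pullbacks. $\mathbb F_V:=\mathbb F_{\mathcal T,/V}$, $*_V$ terminal; for $U\to V$, $\mathrm{Res}^V_U$ is pullback and $\mathrm{Ind}^V_U$ postcomposition. A collection $\mathcal C$ assigns to each $V\in\mathcal T$ a class $\mathcal C_V$ of objects of $\mathbb F_V$; unions are taken pointwise. For $S\in\mathbb F_V$ with orbits $U\in\mathrm{Orb}(S)$ (each with its map $U\to V$) and $T_U\in\mathbb F_U$, $\coprod_U^ST_U:=\coprod_U\mathrm{Ind}_U^VT_U$. A full $\mathcal T$-subcategory is a collection of isomorphism-closed classes stable under restriction. A $\mathcal T$-weak indexing system is a full $\mathcal T$-subcategory $\mathcal C$ with $\mathcal C_V\neq\emptyset\Rightarrow *_V\in\mathcal C_V$ and closed under $\coprod^S_UT_U$ for $S\in\mathcal C_V$, $T_U\in\mathcal C_U$; $\mathrm{wIndSys}_{\mathcal T}$ is their poset under inclusion. For collections $\mathcal C,\mathcal E$: $\mathrm{Cl}_{\mathcal C,0}(\mathcal E)=\mathcal E$, $\mathrm{Cl}_{\mathcal C,n}(\mathcal E)_V=\{\coprod^S_UT_U\mid S\in\mathcal C_V,\ T_U\in\mathrm{Cl}_{\mathcal C,n-1}(\mathcal E)_U\ \forall U\}$, $\mathrm{Cl}_{\mathcal C}(\mathcal E)=\bigcup_n\mathrm{Cl}_{\mathcal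 C,n}(\mathcal E)$, and $\widehat{\mathrm{Cl}}_{\mathcal C}(\mathcal E):=\mathcal E\cup\mathrm{Cl}_{\mathcal C}(\mathcal E)$. *)

theory Defs
  imports Main
begin

text \<open>
A small category T is given by a set of objects Ob, hom-sets Hom X Y, composition
cmp g f (g after f) and identities idm.

F_T (full subcategory of presheaves on finite coproducts of representables) is modelled
by its standard equivalent description (free finite-coproduct completion, via Yoneda):
an object is a finite list of objects of T (the orbits), a morphism from [U_1..U_n] to
[W_1..W_m] is a list of pairs (j_i, h_i) with j_i < m and h_i in Hom U_i W_(j_i).

An object of F_V = F_T/V is a list of pairs (U_i, f_i) with f_i in Hom U_i V.
\<close>

definition category ::
  "'o set \<Rightarrow> ('o \<Rightarrow> 'o \<Rightarrow> 'm set) \<Rightarrow> ('m \<Rightarrow> 'm \<Rightarrow> 'm) \<Rightarrow> ('o \<Rightarrow> 'm) \<Rightarrow> bool" where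
  "category Ob Hom cmp idm \<longleftrightarrow>
     (\<forall>X\<in>Ob. idm X \<in> Hom X X) \<and>
     (\<forall>X\<in>Ob. \<forall>Y\<in>Ob. \<forall>Z\<in>Ob. \<forall>f\<in>Hom X Y. \<forall>g\<in>Hom Y Z. cmp g f \<in> Hom X Z) \<and>
     (\<forall>X\<in>Ob. \<forall>Y\<in>Ob. \<forall>f\<in>Hom X Y. cmp (idm Y) f = f \<and> cmp f (idm X) = f) \<and>
     (\<forall>W\<in>Ob. \<forall>X\<in>Ob. \<forall>Y\<in>Ob. \<forall>Z\<in>Ob. \<forall>f\<in>Hom W X. \<forall>g\<in>Hom X Y. \<forall>h\<in>Hom Y Z.
        cmp h (cmp g f) = cmp (cmp h g) f)"

locale cat_data =
  fixes Ob :: "'o set" and Hom :: "'o \<Rightarrow> 'o \<Rightarrow> 'm set"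
    and cmp :: "'m \<Rightarrow> 'm \<Rightarrow> 'm" and idm :: "'o \<Rightarrow> 'm"
begin

definition fobj :: "'o list \<Rightarrow> bool" where
  "fobj A \<longleftrightarrow> set A \<subseteq> Ob"

definition fmor :: "'o list \<Rightarrow> 'o list \<Rightarrow> (nat \<times> 'm) list set" where
  "fmor A B = {m. length m = length A \<and>
      (\<forall>i<length A. fst (m!i) < length B \<and> snd (m!i) \<in> Hom (A!i) (B ! fst (m!i)))}"

definition fcomp :: "(nat \<times> 'm) list \<Rightarrow> (nat \<times> 'm) list \<Rightarrow> (nat \<times> 'm) list" where
  "fcomp g f = map (\<lambda>(j,h). (fst (g!j), cmp (snd (g!j)) h)) f"

definition fid :: "'o list \<Rightarrow> (nat \<times> 'm) list" where
  "fid A = map (\<lambda>i. (i, idm (A!i))) [0..<length A]"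

definition is_pullback ::
  "'o list \<Rightarrow> 'o list \<Rightarrow> (nat \<times> 'm) list \<Rightarrow> (nat \<times> 'm) list \<Rightarrow>
   'o list \<Rightarrow> (nat \<times> 'm) list \<Rightarrow> (nat \<times> 'm) list \<Rightarrow> bool" where
  "is_pullback A B f g P p1 p2 \<longleftrightarrow>
     fobj P \<and> p1 \<in> fmor P A \<and> p2 \<in> fmor P B \<and> fcomp f p1 = fcomp g p2 \<and>
     (\<forall>Q q1 q2. fobj Q \<and> q1 \<in> fmor Q A \<and> q2 \<in> fmor Q B \<and> fcomp f q1 = fcomp g q2 \<longrightarrow>
        (\<exists>u\<in>fmor Q P. fcomp p1 u = q1 \<and> fcomp p2 u = q2 \<and>
           (\<forall>u'\<in>fmor Q P. fcomp p1 u' = q1 \<and> fcomp p2 u' = q2 \<longrightarrow> u' = u)))"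

definition orbital :: bool where
  "orbital \<longleftrightarrow>
     (\<forall>A B C f g. fobj A \<and> fobj B \<and> fobj C \<and> f \<in> fmor A C \<and> g \<in> fmor B C \<longrightarrow>
        (\<exists>P p1 p2. is_pullback A B f g P p1 p2))"

definition sobj :: "'o \<Rightarrow> ('o \<times> 'm) list \<Rightarrow> bool" where
  "sobj V S \<longleftrightarrow> (\<forall>(U,f)\<in>set S. U \<in> Ob \<and> f \<in> Hom U V)"

text \<open>structure map S \<rightarrow> *_V, viewed as a morphism of F_T into [V]\<close>
definition str :: "('o \<times> 'm) list \<Rightarrow> (nat \<times> 'm) list" where
  "str S = map (\<lambda>(U,f). (0, f)) S"

definition smor :: "('o \<times> 'm) list \<Rightarrow> ('o \<times> 'm) list \<Rightarrow> (nat \<times> 'm) list set" where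
  "smor S S' = {m. m \<in> fmor (map fst S) (map fst S') \<and> fcomp (str S') m = str S}"

definition siso :: "('o \<times> 'm) list \<Rightarrow> ('o \<times> 'm) list \<Rightarrow> bool" where
  "siso S S' \<longleftrightarrow> (\<exists>m\<in>smor S S'. \<exists>m'\<in>smor S' S.
       fcomp m' m = fid (map fst S) \<and> fcomp m m' = fid (map fst S'))"

definition terminal :: "'o \<Rightarrow> ('o \<times> 'm) list" where
  "terminal V = [(V, idm V)]"

text \<open>Ind along a : U \<rightarrow> V is postcomposition\<close>
definition Ind :: "'m \<Rightarrow> ('o \<times> 'm) list \<Rightarrow> ('o \<times> 'm) list" where
  "Ind a T = map (\<lambda>(W,g). (W, cmp a g)) T"

text \<open>\<Coprod>^S_U T_U = \<Coprod>_U Ind_U^V T_U, the orbits of S being the entries of the list S\<close>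
definition coprod_over :: "('o \<times> 'm) list \<Rightarrow> ('o \<times> 'm) list list \<Rightarrow> ('o \<times> 'm) list" where
  "coprod_over S Ts = concat (map2 (\<lambda>(U,f) T. Ind f T) S Ts)"

definition is_wIndSys :: "('o \<Rightarrow> ('o \<times> 'm) list set) \<Rightarrow> bool" where
  "is_wIndSys C \<longleftrightarrow>
     \<comment> \<open>a collection assigns classes to objects V of T only\<close>
     (\<forall>V. V \<notin> Ob \<longrightarrow> C V = {}) \<and>
     (\<forall>V\<in>Ob. \<forall>S\<in>C V. sobj V S) \<and>
     \<comment> \<open>isomorphism-closed\<close>
     (\<forall>V\<in>Ob. \<forall>S S'. S \<in> C V \<and> sobj V S' \<and> siso S S' \<longrightarrow> S' \<in> C V) \<and>
     \<comment> \<open>stable under restriction (pullback) along any U \<rightarrow> V\<close>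
     (\<forall>V\<in>Ob. \<forall>U\<in>Ob. \<forall>a\<in>Hom U V. \<forall>S\<in>C V. \<forall>P p1 p2.
        is_pullback (map fst S) [U] (str S) [(0,a)] P p1 p2 \<longrightarrow> zip P (map snd p2) \<in> C U) \<and>
     \<comment> \<open>contains the terminal object when nonempty\<close>
     (\<forall>V\<in>Ob. C V \<noteq> {} \<longrightarrow> terminal V \<in> C V) \<and>
     \<comment> \<open>closed under indexed coproducts\<close>
     (\<forall>V\<in>Ob. \<forall>S\<in>C V. \<forall>Ts. length Ts = length S \<and> (\<forall>i<length S. Ts!i \<in> C (fst (S!i)))
        \<longrightarrow> coprod_over S Ts \<in> C V)"

text \<open>One closure step: objects which are (i.e. are isomorphic to) \<Coprod>^S_U T_U with
S in C_V and T_U in E_U.\<close>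
definition Cl_step :: "('o \<Rightarrow> ('o \<times> 'm) list set) \<Rightarrow> ('o \<Rightarrow> ('o \<times> 'm) list set) \<Rightarrow>
    'o \<Rightarrow> ('o \<times> 'm) list set" where
  "Cl_step C E V = (if V \<in> Ob then
     {X. sobj V X \<and> (\<exists>S Ts. S \<in> C V \<and> length Ts = length S \<and>
            (\<forall>i<length S. Ts!i \<in> E (fst (S!i))) \<and> siso (coprod_over S Ts) X)}
     else {})"

fun Cl_n :: "('o \<Rightarrow> ('o \<times> 'm) list set) \<Rightarrow> nat \<Rightarrow> ('o \<Rightarrow> ('o \<times> 'm) list set) \<Rightarrow>
    'o \<Rightarrow> ('o \<times> 'm) list set" where
  "Cl_n C 0 E = E"
| "Cl_n C (Suc n) E = Cl_step C (Cl_n C n E)"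

definition Cl :: "('o \<Rightarrow> ('o \<times> 'm) list set) \<Rightarrow> ('o \<Rightarrow> ('o \<times> 'm) list set) \<Rightarrow>
    'o \<Rightarrow> ('o \<times> 'm) list set" where
  "Cl C E V = (\<Union>n. Cl_n C n E V)"

definition Cl_hat :: "('o \<Rightarrow> ('o \<times> 'm) list set) \<Rightarrow> ('o \<Rightarrow> ('o \<times> 'm) list set) \<Rightarrow>
    'o \<Rightarrow> ('o \<times> 'm) list set" where
  "Cl_hat C E V = E V \<union> Cl C E V"

definition join_formula :: "('o \<Rightarrow> ('o \<times> 'm) list set) \<Rightarrow> ('o \<Rightarrow> ('o \<times> 'm) list set) \<Rightarrow>
    'o \<Rightarrow> ('o \<times> 'm) list set" where
  "join_formula C D V = (\<Union>n. (((\<lambda>E. Cl_hat C (Cl_hat D E)) ^^ n) (\<lambda>W. C W \<union> D W)) V)"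

end

end

theory Submission
  imports Defs
begin

locale ocat = cat_data Ob Hom cmp idm
  for Ob :: "'o set" and Hom :: "'o \<Rightarrow> 'o \<Rightarrow> 'm set"
    and cmp :: "'m \<Rightarrow> 'm \<Rightarrow> 'm" and idm :: "'o \<Rightarrow> 'm" +
  assumes catax: "category Ob Hom cmp idm"
    and orb: "orbital"
begin

lemma id_hom: "X \<in> Ob \<Longrightarrow> idm X \<in> Hom X X"
  using catax unfolding category_def by blast
lemma comp_hom: "X \<in> Ob \<Longrightarrow> Y \<in> Ob \<Longrightarrow> Z \<in> Ob \<Longrightarrow> f \<in> Hom X Y \<Longrightarrow> g \<in> Hom Y Z \<Longrightarrow> cmp g f \<in> Hom X Z"
  using catax unfolding category_def by blast
lemma id_l: "X \<in> Ob \<Longrightarrow> Y \<in> Ob \<Longrightarrow> f \<in> Hom X Y \<Longrightarrow> cmp (idm Y) f = f"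
  using catax unfolding category_def by blast
lemma id_r: "X \<in> Ob \<Longrightarrow> Y \<in> Ob \<Longrightarrow> f \<in> Hom X Y \<Longrightarrow> cmp f (idm X) = f"
  using catax unfolding category_def by blast
lemma assoc: "W \<in> Ob \<Longrightarrow> X \<in> Ob \<Longrightarrow> Y \<in> Ob \<Longrightarrow> Z \<in> Ob \<Longrightarrow> f \<in> Hom W X \<Longrightarrow> g \<in> Hom X Y \<Longrightarrow> h \<in> Hom Y Z
   \<Longrightarrow> cmp h (cmp g f) = cmp (cmp h g) f"
  using catax unfolding category_def by blast

definition pts :: "'o \<Rightarrow> 'o list \<Rightarrow> (nat \<times> 'm) set" where
  "pts W A = {p. fst p < length A \<and> snd p \<in> Hom W (A ! fst p)}"

definition act :: "(nat \<times> 'm) list \<Rightarrow> nat \<times> 'm \<Rightarrow> nat \<times> 'm" where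
  "act g p = (fst (g ! fst p), cmp (snd (g ! fst p)) (snd p))"

lemma fobj_nth: "fobj A \<longleftrightarrow> (\<forall>i<length A. A ! i \<in> Ob)"
  unfolding fobj_def by (auto simp: set_conv_nth)

lemma fobj_Ob: "fobj A \<Longrightarrow> i < length A \<Longrightarrow> A ! i \<in> Ob"
  using fobj_nth by blast

lemma sobj_nth: "sobj V S \<longleftrightarrow> (\<forall>i<length S. fst (S ! i) \<in> Ob \<and> snd (S ! i) \<in> Hom (fst (S ! i)) V)"
proof
  assume "sobj V S" thus "\<forall>i<length S. fst (S ! i) \<in> Ob \<and> snd (S ! i) \<in> Hom (fst (S ! i)) V"
    unfolding sobj_def by (metis (mono_tags, lifting) case_prod_beta nth_mem)
next
  assume "\<forall>i<length S. fst (S ! i) \<in> Ob \<and> snd (S ! i) \<in> Hom (fst (S ! i)) V"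
  thus "sobj V S" unfolding sobj_def by (auto simp: in_set_conv_nth) (metis fst_conv snd_conv)+
qed

lemma fcomp_act: "fcomp g f = map (act g) f"
  unfolding fcomp_def act_def by (auto simp: case_prod_beta)

lemma fmor_iff: "m \<in> fmor A B \<longleftrightarrow> length m = length A \<and> (\<forall>i<length A. m ! i \<in> pts (A ! i) B)"
  unfolding fmor_def pts_def by auto

lemma fmor_len: "m \<in> fmor A B \<Longrightarrow> length m = length A"
  by (simp add: fmor_iff)

lemma fmor_pt: "m \<in> fmor A B \<Longrightarrow> i < length A \<Longrightarrow> m ! i \<in> pts (A ! i) B"
  by (simp add: fmor_iff)

lemma act_pts:
  assumes "fobj A" "fobj B" "W \<in> Ob" "g \<in> fmor A B" "p \<in> pts W A"
  shows "act g p \<in> pts W B"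
proof -
  have p: "fst p < length A" "snd p \<in> Hom W (A ! fst p)" using assms(5) by (auto simp: pts_def)
  have g: "g ! fst p \<in> pts (A ! fst p) B" using fmor_pt[OF assms(4) p(1)] .
  hence "fst (g ! fst p) < length B" "snd (g ! fst p) \<in> Hom (A ! fst p) (B ! fst (g ! fst p))"
    by (auto simp: pts_def)
  moreover have "A ! fst p \<in> Ob" using assms(1) p(1) fobj_Ob by blast
  moreover have "B ! fst (g ! fst p) \<in> Ob" using assms(2) calculation(1) fobj_Ob by blast
  ultimately show ?thesis using p assms(3) unfolding act_def pts_def
    by (auto intro: comp_hom)
qed

lemma act_act:
  assumes "fobj A" "fobj B" "fobj C" "W \<in> Ob" "f \<in> fmor A B" "g \<in> fmor B C" "p \<in> pts W A"
  shows "act g (act f p) = act (fcomp g f) p"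
proof -
  have p: "fst p < length A" "snd p \<in> Hom W (A ! fst p)" using assms(7) by (auto simp: pts_def)
  have f: "f ! fst p \<in> pts (A ! fst p) B" using fmor_pt[OF assms(5) p(1)] .
  hence f2: "fst (f ! fst p) < length B" "snd (f ! fst p) \<in> Hom (A ! fst p) (B ! fst (f ! fst p))"
    by (auto simp: pts_def)
  have g: "g ! fst (f ! fst p) \<in> pts (B ! fst (f ! fst p)) C" using fmor_pt[OF assms(6) f2(1)] .
  hence g2: "fst (g ! fst (f ! fst p)) < length C" "snd (g ! fst (f ! fst p)) \<in> Hom (B ! fst (f ! fst p)) (C ! fst (g ! fst (f ! fst p)))"
    by (auto simp: pts_def)
  have obs: "A ! fst p \<in> Ob" "B ! fst (f ! fst p) \<in> Ob" "C ! fst (g ! fst (f ! fst p)) \<in> Ob"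
    using assms(1,2,3) p(1) f2(1) g2(1) fobj_Ob by blast+
  have "fcomp g f ! fst p = act g (f ! fst p)" using p(1) fmor_len[OF assms(5)] by (simp add: fcomp_act)
  thus ?thesis unfolding act_def using assoc[OF assms(4) obs p(2) f2(2) g2(2)] by simp
qed

lemma fcomp_fmor:
  assumes "fobj A" "fobj B" "fobj C" "f \<in> fmor A B" "g \<in> fmor B C"
  shows "fcomp g f \<in> fmor A C"
  unfolding fmor_iff
proof (intro conjI allI impI)
  show "length (fcomp g f) = length A" using fmor_len[OF assms(4)] by (simp add: fcomp_act)
  fix i assume i: "i < length A"
  have "fcomp g f ! i = act g (f ! i)" using i fmor_len[OF assms(4)] by (simp add: fcomp_act)
  thus "fcomp g f ! i \<in> pts (A ! i) C"
    using act_pts[OF assms(2,3) _ assms(5) fmor_pt[OF assms(4) i]] fobj_Ob[OF assms(1) i] by simp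
qed

lemma fcomp_nth: "f \<in> fmor A B \<Longrightarrow> i < length A \<Longrightarrow> fcomp g f ! i = act g (f ! i)"
  using fmor_len by (simp add: fcomp_act)

lemma fcomp_assoc:
  assumes "fobj A" "fobj B" "fobj C" "fobj D" "f \<in> fmor A B" "g \<in> fmor B C" "h \<in> fmor C D"
  shows "fcomp h (fcomp g f) = fcomp (fcomp h g) f"
proof (rule nth_equalityI)
  show "length (fcomp h (fcomp g f)) = length (fcomp (fcomp h g) f)" by (simp add: fcomp_act)
  fix i assume "i < length (fcomp h (fcomp g f))"
  hence i: "i < length A" using fmor_len[OF assms(5)] by (simp add: fcomp_act)
  have "fcomp h (fcomp g f) ! i = act h (act g (f ! i))"
    using i fmor_len[OF assms(5)] by (simp add: fcomp_act)
  also have "\<dots> = act (fcomp h g) (f ! i)"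
    using act_act[OF assms(2,3,4) fobj_Ob[OF assms(1) i] assms(6,7) fmor_pt[OF assms(5) i]] .
  also have "\<dots> = fcomp (fcomp h g) f ! i" using i fmor_len[OF assms(5)] by (simp add: fcomp_act)
  finally show "fcomp h (fcomp g f) ! i = fcomp (fcomp h g) f ! i" .
qed

lemma gen_pt: "fobj A \<Longrightarrow> i < length A \<Longrightarrow> (i, idm (A ! i)) \<in> pts (A ! i) A"
  unfolding pts_def by (auto intro: id_hom fobj_Ob)

lemma act_gen: "fobj A \<Longrightarrow> fobj B \<Longrightarrow> f \<in> fmor A B \<Longrightarrow> i < length A \<Longrightarrow> act f (i, idm (A ! i)) = f ! i"
proof -
  assume a: "fobj A" "fobj B" "f \<in> fmor A B" "i < length A"
  hence "fst (f ! i) < length B" "snd (f ! i) \<in> Hom (A ! i) (B ! fst (f ! i))"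
    using fmor_pt[of f A B i] unfolding pts_def by auto
  hence "cmp (snd (f ! i)) (idm (A ! i)) = snd (f ! i)" using a by (meson id_r fobj_Ob)
  thus ?thesis unfolding act_def by simp
qed

lemma fid_nth: "i < length A \<Longrightarrow> fid A ! i = (i, idm (A ! i))"
  unfolding fid_def by simp

lemma fid_len[simp]: "length (fid A) = length A"
  unfolding fid_def by simp

lemma fid_fmor: "fobj A \<Longrightarrow> fid A \<in> fmor A A"
  unfolding fmor_iff by (simp add: fid_nth gen_pt)

lemma act_fid: "fobj A \<Longrightarrow> W \<in> Ob \<Longrightarrow> p \<in> pts W A \<Longrightarrow> act (fid A) p = p"
proof -
  assume a: "fobj A" "W \<in> Ob" "p \<in> pts W A"
  hence "cmp (idm (A ! fst p)) (snd p) = snd p" unfolding pts_def by (auto intro!: id_l fobj_Ob)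
  thus ?thesis using a unfolding act_def pts_def by (simp add: fid_nth)
qed

lemma fcomp_fid_l: "fobj A \<Longrightarrow> fobj B \<Longrightarrow> f \<in> fmor A B \<Longrightarrow> fcomp (fid B) f = f"
  by (rule nth_equalityI) (auto simp: fcomp_act fmor_len intro!: act_fid fmor_pt fobj_Ob)

lemma fcomp_fid_r: "fobj A \<Longrightarrow> fobj B \<Longrightarrow> f \<in> fmor A B \<Longrightarrow> fcomp f (fid A) = f"
  by (rule nth_equalityI) (auto simp: fcomp_act fmor_len fid_nth act_gen)

lemma str_len[simp]: "length (str S) = length S"
  by (simp add: str_def)
lemma str_nth: "i < length S \<Longrightarrow> str S ! i = (0, snd (S ! i))"
  by (simp add: str_def case_prod_beta)

lemma str_fmor: "sobj V S \<Longrightarrow> str S \<in> fmor (map fst S) [V]"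
  unfolding fmor_iff pts_def by (auto simp: str_nth sobj_nth)

lemma fobj_sobj: "sobj V S \<Longrightarrow> fobj (map fst S)"
  by (auto simp: fobj_nth sobj_nth)

lemma fobj_single: "V \<in> Ob \<Longrightarrow> fobj [V]"
  by (simp add: fobj_def)

end

context ocat
begin

lemma smor_iff: "m \<in> smor S S' \<longleftrightarrow> m \<in> fmor (map fst S) (map fst S') \<and> fcomp (str S') m = str S"
  unfolding smor_def by simp

lemma smor_comp:
  assumes V: "V \<in> Ob" and s: "sobj V A" "sobj V B" "sobj V C"
    and m: "m \<in> smor A B" and n: "n \<in> smor B C"
  shows "fcomp n m \<in> smor A C"
proof -
  have f: "fobj (map fst A)" "fobj (map fst B)" "fobj (map fst C)" "fobj [V]"
    using s V fobj_sobj fobj_single by auto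
  have mm: "m \<in> fmor (map fst A) (map fst B)" "fcomp (str B) m = str A" using m smor_iff by auto
  have nn: "n \<in> fmor (map fst B) (map fst C)" "fcomp (str C) n = str B" using n smor_iff by auto
  have "fcomp (str C) (fcomp n m) = fcomp (fcomp (str C) n) m"
    using fcomp_assoc[OF f mm(1) nn(1) str_fmor[OF s(3)]] .
  thus ?thesis using mm nn fcomp_fmor[OF f(1-3) mm(1) nn(1)] smor_iff by simp
qed

lemma siso_bij:
  assumes V: "V \<in> Ob" and s: "sobj V A" "sobj V B" and i: "siso A B"
  shows "\<exists>m\<in>smor A B. \<forall>W\<in>Ob. bij_betw (act m) (pts W (map fst A)) (pts W (map fst B))"
proof -
  obtain m m' where m: "m \<in> smor A B" and m': "m' \<in> smor B A"
    and e1: "fcomp m' m = fid (map fst A)" and e2: "fcomp m m' = fid (map fst B)"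
    using i unfolding siso_def by blast
  have f: "fobj (map fst A)" "fobj (map fst B)" using s fobj_sobj by auto
  have mf: "m \<in> fmor (map fst A) (map fst B)" "m' \<in> fmor (map fst B) (map fst A)"
    using m m' smor_iff by auto
  show ?thesis
  proof (intro bexI[OF _ m] ballI)
    fix W assume W: "W \<in> Ob"
    show "bij_betw (act m) (pts W (map fst A)) (pts W (map fst B))"
    proof (rule bij_betw_byWitness[where f'="act m'"])
      show "\<forall>a\<in>pts W (map fst A). act m' (act m a) = a"
        using act_act[OF f(1,2,1) W mf] e1 act_fid[OF f(1) W] by simp
      show "\<forall>a'\<in>pts W (map fst B). act m (act m' a') = a'"
        using act_act[OF f(2,1,2) W mf(2,1)] e2 act_fid[OF f(2) W] by simp
      show "act m ` pts W (map fst A) \<subseteq> pts W (map fst B)"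
        using act_pts[OF f W mf(1)] by blast
      show "act m' ` pts W (map fst B) \<subseteq> pts W (map fst A)"
        using act_pts[OF f(2,1) W mf(2)] by blast
    qed
  qed
qed

lemma iso_crit:
  assumes V: "V \<in> Ob" and s: "sobj V A" "sobj V B" and m: "m \<in> smor A B"
    and b: "\<forall>W\<in>Ob. bij_betw (act m) (pts W (map fst A)) (pts W (map fst B))"
  shows "siso A B"
proof -
  let ?A = "map fst A" and ?B = "map fst B"
  have f: "fobj ?A" "fobj ?B" "fobj [V]" using s V fobj_sobj fobj_single by auto
  have mf: "m \<in> fmor ?A ?B" and ms: "fcomp (str B) m = str A" using m smor_iff by auto
  define m' where "m' = map (\<lambda>j. inv_into (pts (?B ! j) ?A) (act m) (j, idm (?B ! j))) [0..<length B]"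
  have obB: "j < length B \<Longrightarrow> ?B ! j \<in> Ob" for j using f(2) fobj_Ob by fastforce
  have m'n: "j < length B \<Longrightarrow> m' ! j \<in> pts (?B ! j) ?A \<and> act m (m' ! j) = (j, idm (?B ! j))" for j
  proof -
    assume j: "j < length B"
    have bb: "bij_betw (act m) (pts (?B ! j) ?A) (pts (?B ! j) ?B)" using b obB[OF j] by blast
    have g: "(j, idm (?B ! j)) \<in> pts (?B ! j) ?B" using gen_pt[OF f(2)] j by simp
    have "inv_into (pts (?B ! j) ?A) (act m) (j, idm (?B ! j)) \<in> pts (?B ! j) ?A"
      using inv_into_into[of "(j, idm (?B ! j))" "act m" "pts (?B ! j) ?A"] bb g
      unfolding bij_betw_def by blast
    moreover have "act m (inv_into (pts (?B ! j) ?A) (act m) (j, idm (?B ! j))) = (j, idm (?B ! j))"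
      using bij_betw_inv_into_right[OF bb g] .
    moreover have "m' ! j = inv_into (pts (?B ! j) ?A) (act m) (j, idm (?B ! j))"
      unfolding m'_def using j by simp
    ultimately show ?thesis by simp
  qed
  have m'f: "m' \<in> fmor ?B ?A" unfolding fmor_iff using m'n by (simp add: m'_def)
  have lm': "length m' = length B" by (simp add: m'_def)
  have e2: "fcomp m m' = fid ?B"
  proof (rule nth_equalityI)
    show "length (fcomp m m') = length (fid ?B)" using lm' by (simp add: fcomp_act)
    fix j assume "j < length (fcomp m m')"
    hence j: "j < length B" using lm' by (simp add: fcomp_act)
    show "fcomp m m' ! j = fid ?B ! j" using j lm' m'n[OF j] by (simp add: fcomp_act fid_nth)
  qed
  have e1: "fcomp m' m = fid ?A"
  proof (rule nth_equalityI)
    show "length (fcomp m' m) = length (fid ?A)" using fmor_len[OF mf] by (simp add: fcomp_act)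
    fix i assume "i < length (fcomp m' m)"
    hence i: "i < length A" using fmor_len[OF mf] by (simp add: fcomp_act)
    have Ai: "?A ! i \<in> Ob" using f(1) i fobj_Ob by fastforce
    have mi: "m ! i \<in> pts (?A ! i) ?B" using fmor_pt[OF mf] i by simp
    have p1: "act m' (m ! i) \<in> pts (?A ! i) ?A" using act_pts[OF f(2,1) Ai m'f mi] .
    have p2: "(i, idm (?A ! i)) \<in> pts (?A ! i) ?A" using gen_pt[OF f(1)] i by simp
    have "act m (act m' (m ! i)) = act (fcomp m m') (m ! i)" using act_act[OF f(2,1,2) Ai m'f mf mi] .
    also have "\<dots> = m ! i" using e2 act_fid[OF f(2) Ai mi] by simp
    also have "\<dots> = act m (i, idm (?A ! i))" using act_gen[OF f(1,2) mf] i by simp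
    finally have "act m' (m ! i) = (i, idm (?A ! i))"
      using b Ai p1 p2 unfolding bij_betw_def inj_on_def by blast
    thus "fcomp m' m ! i = fid ?A ! i" using i fmor_len[OF mf] by (simp add: fcomp_act fid_nth)
  qed
  have m's: "fcomp (str A) m' = str B"
  proof (rule nth_equalityI)
    show "length (fcomp (str A) m') = length (str B)" by (simp add: fcomp_act m'_def)
    fix j assume "j < length (fcomp (str A) m')"
    hence j: "j < length B" by (simp add: fcomp_act m'_def)
    have Bj: "?B ! j \<in> Ob" using obB j .
    have "fcomp (str A) m' ! j = act (str A) (m' ! j)" using j by (simp add: fcomp_act m'_def)
    also have "\<dots> = act (fcomp (str B) m) (m' ! j)" using ms by simp
    also have "\<dots> = act (str B) (act m (m' ! j))"
      using act_act[OF f(1,2,3) Bj mf str_fmor[OF s(2)], of "m' ! j"] m'n[OF j] by (simp only:)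
    also have "\<dots> = act (str B) (j, idm (?B ! j))" using m'n[OF j] by simp
    also have "\<dots> = str B ! j" using act_gen[OF f(2,3) str_fmor[OF s(2)]] j by simp
    finally show "fcomp (str A) m' ! j = str B ! j" .
  qed
  show ?thesis unfolding siso_def using m m'f m's e1 e2 smor_iff by blast
qed

lemma siso_refl: "V \<in> Ob \<Longrightarrow> sobj V A \<Longrightarrow> siso A A"
proof -
  assume a: "V \<in> Ob" "sobj V A"
  have f: "fobj (map fst A)" using a fobj_sobj by auto
  have "fid (map fst A) \<in> smor A A"
    using fid_fmor[OF f] fcomp_fid_r[OF f fobj_single[OF a(1)] str_fmor[OF a(2)]] smor_iff by auto
  moreover have "fcomp (fid (map fst A)) (fid (map fst A)) = fid (map fst A)"
    using fcomp_fid_l[OF f f fid_fmor[OF f]] .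
  ultimately show ?thesis unfolding siso_def by blast
qed

lemma siso_sym: "siso A B \<Longrightarrow> siso B A"
  unfolding siso_def by blast

lemma siso_trans:
  assumes V: "V \<in> Ob" and s: "sobj V A" "sobj V B" "sobj V C" and i: "siso A B" "siso B C"
  shows "siso A C"
proof -
  have f: "fobj (map fst A)" "fobj (map fst B)" "fobj (map fst C)" using s fobj_sobj by auto
  obtain m where m: "m \<in> smor A B" "\<forall>W\<in>Ob. bij_betw (act m) (pts W (map fst A)) (pts W (map fst B))"
    using siso_bij[OF V s(1,2) i(1)] by blast
  obtain n where n: "n \<in> smor B C" "\<forall>W\<in>Ob. bij_betw (act n) (pts W (map fst B)) (pts W (map fst C))"
    using siso_bij[OF V s(2,3) i(2)] by blast
  show ?thesis
  proof (rule iso_crit[OF V s(1,3) smor_comp[OF V s m(1) n(1)]], intro ballI)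
    fix W assume W: "W \<in> Ob"
    have "bij_betw (act n \<circ> act m) (pts W (map fst A)) (pts W (map fst C))"
      using bij_betw_trans[of "act m" "pts W (map fst A)" "pts W (map fst B)" "act n" "pts W (map fst C)"] m(2) n(2) W by simp
    moreover have mf: "m \<in> fmor (map fst A) (map fst B)" "n \<in> fmor (map fst B) (map fst C)"
      using m(1) n(1) smor_iff by auto
    moreover have "\<forall>p\<in>pts W (map fst A). (act n \<circ> act m) p = act (fcomp n m) p"
      using act_act[OF f W mf] by simp
    ultimately show "bij_betw (act (fcomp n m)) (pts W (map fst A)) (pts W (map fst C))"
      using bij_betw_cong[of "pts W (map fst A)" "act n \<circ> act m" "act (fcomp n m)" "pts W (map fst C)"] by simp
  qed
qed

end

context ocat
begin

definition lpb where
  "lpb A B f g P p1 p2 \<longleftrightarrow> fobj P \<and> p1 \<in> fmor P A \<and> p2 \<in> fmor P B \<and> fcomp f p1 = fcomp g p2 \<and>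
     (\<forall>W\<in>Ob. \<forall>x\<in>pts W A. \<forall>y\<in>pts W B. act f x = act g y \<longrightarrow>
        (\<exists>!z. z \<in> pts W P \<and> act p1 z = x \<and> act p2 z = y))"

lemma lpbD:
  assumes "lpb A B f g P p1 p2"
  shows "fobj P" "p1 \<in> fmor P A" "p2 \<in> fmor P B" "fcomp f p1 = fcomp g p2"
    "\<And>W x y. W \<in> Ob \<Longrightarrow> x \<in> pts W A \<Longrightarrow> y \<in> pts W B \<Longrightarrow> act f x = act g y \<Longrightarrow>
        \<exists>!z. z \<in> pts W P \<and> act p1 z = x \<and> act p2 z = y"
  using assms unfolding lpb_def by blast+

lemma single_fmor: "x \<in> pts W A \<Longrightarrow> [x] \<in> fmor [W] A"
  by (simp add: fmor_iff)

lemma fmor_single: "u \<in> fmor [W] P \<Longrightarrow> u = [u ! 0] \<and> u ! 0 \<in> pts W P"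
  using fmor_pt[of u "[W]" P 0] fmor_len[of u "[W]" P]
  by (cases u) auto

lemma pb_lpb:
  assumes pb: "is_pullback A B f g P p1 p2"
  shows "lpb A B f g P p1 p2"
  unfolding lpb_def
proof (intro conjI ballI impI)
  show "fobj P" "p1 \<in> fmor P A" "p2 \<in> fmor P B" "fcomp f p1 = fcomp g p2"
    using pb unfolding is_pullback_def by auto
  fix W x y assume W: "W \<in> Ob" and x: "x \<in> pts W A" and y: "y \<in> pts W B" and e: "act f x = act g y"
  have "fobj [W]" using W by (simp add: fobj_def)
  moreover have "fcomp f [x] = fcomp g [y]" using e by (simp add: fcomp_act)
  ultimately obtain u where u: "u \<in> fmor [W] P" "fcomp p1 u = [x]" "fcomp p2 u = [y]"
    and uu: "\<forall>u'\<in>fmor [W] P. fcomp p1 u' = [x] \<and> fcomp p2 u' = [y] \<longrightarrow> u' = u"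
    using pb single_fmor[OF x] single_fmor[OF y] unfolding is_pullback_def by meson
  have u0: "u = [u ! 0]" "u ! 0 \<in> pts W P" using fmor_single[OF u(1)] by auto
  show "\<exists>!z. z \<in> pts W P \<and> act p1 z = x \<and> act p2 z = y"
  proof (rule ex1I[of _ "u ! 0"])
    show "u ! 0 \<in> pts W P \<and> act p1 (u ! 0) = x \<and> act p2 (u ! 0) = y"
      using u0 u(2,3) by (metis fcomp_act list.inject list.simps(8,9))
    fix z assume z: "z \<in> pts W P \<and> act p1 z = x \<and> act p2 z = y"
    hence "[z] = u" using uu single_fmor[of z W P] by (simp add: fcomp_act)
    thus "z = u ! 0" by auto
  qed
qed

lemma lpb_valid:
  assumes l: "lpb A B f g P p1 p2" and f: "fobj A" "fobj B" "fobj C" and W: "W \<in> Ob"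
    and ff: "f \<in> fmor A C" "g \<in> fmor B C" and w: "w \<in> pts W P"
  shows "act f (act p1 w) = act g (act p2 w)"
proof -
  note L = lpbD[OF l]
  have "act f (act p1 w) = act (fcomp f p1) w" using act_act[OF L(1) f(1,3) W L(2) ff(1) w] .
  also have "\<dots> = act (fcomp g p2) w" using L(4) by simp
  also have "\<dots> = act g (act p2 w)" using act_act[OF L(1) f(2,3) W L(3) ff(2) w] by simp
  finally show ?thesis .
qed

lemma lpb_iso:
  assumes l: "lpb A B f g P p1 p2" and f: "fobj A" "fobj A'" "fobj B" "fobj C"
    and m: "m \<in> fmor A A'" "m' \<in> fmor A' A" "fcomp m' m = fid A" "fcomp m m' = fid A'"
    and ff: "f' \<in> fmor A' C" "fcomp f' m = f" "g \<in> fmor B C"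
  shows "lpb A' B f' g P (fcomp m p1) p2"
proof -
  note L = lpbD[OF l]
  show ?thesis unfolding lpb_def
  proof (intro conjI ballI impI)
    show "fobj P" "p2 \<in> fmor P B" using L by auto
    show "fcomp m p1 \<in> fmor P A'" using fcomp_fmor[OF L(1) f(1,2) L(2) m(1)] .
    show "fcomp f' (fcomp m p1) = fcomp g p2"
      using fcomp_assoc[OF L(1) f(1,2,4) L(2) m(1) ff(1)] ff(2) L(4) by simp
    fix W x y assume W: "W \<in> Ob" and x: "x \<in> pts W A'" and y: "y \<in> pts W B" and e: "act f' x = act g y"
    have x': "act m' x \<in> pts W A" using act_pts[OF f(2,1) W m(2) x] .
    have mx: "act m (act m' x) = x" using act_act[OF f(2,1,2) W m(2,1) x] m(4) act_fid[OF f(2) W x] by simp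
    have "act f (act m' x) = act f' x"
      using act_act[OF f(1,2,4) W m(1) ff(1) x'] ff(2) mx by simp
    hence "act f (act m' x) = act g y" using e by simp
    then obtain z where z: "z \<in> pts W P" "act p1 z = act m' x" "act p2 z = y"
      and zu: "\<And>z'. z' \<in> pts W P \<and> act p1 z' = act m' x \<and> act p2 z' = y \<Longrightarrow> z' = z"
      using L(5)[OF W x' y] by metis
    show "\<exists>!z. z \<in> pts W P \<and> act (fcomp m p1) z = x \<and> act p2 z = y"
    proof (rule ex1I[of _ z])
      show "z \<in> pts W P \<and> act (fcomp m p1) z = x \<and> act p2 z = y"
        using z act_act[OF L(1) f(1,2) W L(2) m(1) z(1)] mx by simp
      fix z' assume z': "z' \<in> pts W P \<and> act (fcomp m p1) z' = x \<and> act p2 z' = y"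
      have p1z': "act p1 z' \<in> pts W A" using act_pts[OF L(1) f(1) W L(2)] z' by blast
      have "act m (act p1 z') = x" using z' act_act[OF L(1) f(1,2) W L(2) m(1)] by simp
      hence "act m' (act m (act p1 z')) = act m' x" by simp
      hence "act p1 z' = act m' x" using act_act[OF f(1,2,1) W m(1,2) p1z'] m(3) act_fid[OF f(1) W p1z'] by simp
      thus "z' = z" using zu z' by blast
    qed
  qed
qed

lemma lpb_paste:
  assumes l1: "lpb A B f g P0 q1 q2" and l2: "lpb A' P0 h q1 Y y1 y2"
    and f: "fobj A" "fobj A'" "fobj B" "fobj C"
    and ff: "f \<in> fmor A C" "g \<in> fmor B C" "h \<in> fmor A' A"
  shows "lpb A' B (fcomp f h) g Y y1 (fcomp q2 y2)"
proof -
  note L1 = lpbD[OF l1] and L2 = lpbD[OF l2]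
  show ?thesis unfolding lpb_def
  proof (intro conjI ballI impI)
    show "fobj Y" "y1 \<in> fmor Y A'" using L2 by auto
    show "fcomp q2 y2 \<in> fmor Y B" using fcomp_fmor[OF L2(1) L1(1) f(3) L2(3) L1(3)] .
    have "fcomp (fcomp f h) y1 = fcomp f (fcomp h y1)" using fcomp_assoc[OF L2(1) f(2,1,4) L2(2) ff(3,1)] by simp
    also have "\<dots> = fcomp f (fcomp q1 y2)" using L2(4) by simp
    also have "\<dots> = fcomp (fcomp f q1) y2" using fcomp_assoc[OF L2(1) L1(1) f(1,4) L2(3) L1(2) ff(1)] .
    also have "\<dots> = fcomp (fcomp g q2) y2" using L1(4) by simp
    also have "\<dots> = fcomp g (fcomp q2 y2)" using fcomp_assoc[OF L2(1) L1(1) f(3,4) L2(3) L1(3) ff(2)] by simp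
    finally show "fcomp (fcomp f h) y1 = fcomp g (fcomp q2 y2)" .
    fix W x y assume W: "W \<in> Ob" and x: "x \<in> pts W A'" and y: "y \<in> pts W B" and e: "act (fcomp f h) x = act g y"
    have hx: "act h x \<in> pts W A" using act_pts[OF f(2,1) W ff(3) x] .
    have "act f (act h x) = act g y" using e act_act[OF f(2,1,4) W ff(3,1) x] by simp
    then obtain w where w: "w \<in> pts W P0" "act q1 w = act h x" "act q2 w = y"
      and wu: "\<And>w'. w' \<in> pts W P0 \<and> act q1 w' = act h x \<and> act q2 w' = y \<Longrightarrow> w' = w"
      using L1(5)[OF W hx y] by metis
    obtain z where z: "z \<in> pts W Y" "act y1 z = x" "act y2 z = w"
      and zu: "\<And>z'. z' \<in> pts W Y \<and> act y1 z' = x \<and> act y2 z' = w \<Longrightarrow> z' = z"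
      using L2(5)[OF W x w(1)] w(2) by metis
    show "\<exists>!z. z \<in> pts W Y \<and> act y1 z = x \<and> act (fcomp q2 y2) z = y"
    proof (rule ex1I[of _ z])
      show "z \<in> pts W Y \<and> act y1 z = x \<and> act (fcomp q2 y2) z = y"
        using z w act_act[OF L2(1) L1(1) f(3) W L2(3) L1(3) z(1)] by simp
      fix z' assume z': "z' \<in> pts W Y \<and> act y1 z' = x \<and> act (fcomp q2 y2) z' = y"
      have y2z: "act y2 z' \<in> pts W P0" using act_pts[OF L2(1) L1(1) W L2(3)] z' by blast
      have "act q1 (act y2 z') = act h (act y1 z')"
        using lpb_valid[OF l2 f(2) L1(1) f(1) W ff(3) L1(2)] z' by metis
      moreover have "act q2 (act y2 z') = y" using z' act_act[OF L2(1) L1(1) f(3) W L2(3) L1(3)] by simp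
      ultimately have "act y2 z' = w" using wu y2z z' by simp
      thus "z' = z" using zu z' by blast
    qed
  qed
qed

lemma str_zip:
  assumes "p2 \<in> fmor P [U]"
  shows "str (zip P (map snd p2)) = p2" "map fst (zip P (map snd p2)) = P"
proof -
  have len: "length p2 = length P" using fmor_len[OF assms] .
  have "\<And>i. i < length P \<Longrightarrow> fst (p2 ! i) = 0" using fmor_pt[OF assms] by (auto simp: pts_def)
  thus "str (zip P (map snd p2)) = p2"
    by (intro nth_equalityI) (auto simp: len str_nth prod_eq_iff)
  show "map fst (zip P (map snd p2)) = P" using len by simp
qed

lemma sobj_zip:
  assumes "fobj P" "p2 \<in> fmor P [U]"
  shows "sobj U (zip P (map snd p2))"
proof -
  have "snd (p2 ! i) \<in> Hom (P ! i) U" if i: "i < length P" for i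
  proof -
    have "p2 ! i \<in> pts (P ! i) [U]" using fmor_pt[OF assms(2) i] .
    hence "fst (p2 ! i) = 0" "snd (p2 ! i) \<in> Hom (P ! i) ([U] ! fst (p2 ! i))" unfolding pts_def by auto
    thus ?thesis by simp
  qed
  thus ?thesis using assms fmor_len[OF assms(2)] unfolding sobj_nth by (auto simp: fobj_Ob)
qed

lemma ex1_uniq: "\<exists>!z. P z \<Longrightarrow> P a \<Longrightarrow> P b \<Longrightarrow> a = b"
  by blast

lemma lpb_unique:
  assumes U: "U \<in> Ob" and s: "sobj U Y" "sobj U Z" and f: "fobj A" "fobj C"
    and ff: "f \<in> fmor A C" "g \<in> fmor [U] C"
    and ly: "lpb A [U] f g (map fst Y) y1 (str Y)" and lz: "lpb A [U] f g (map fst Z) z1 (str Z)"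
  shows "siso Y Z"
proof -
  let ?Y = "map fst Y" and ?Z = "map fst Z"
  note LY = lpbD[OF ly] and LZ = lpbD[OF lz]
  have fU: "fobj [U]" using U fobj_single by auto
  have obY: "e < length Y \<Longrightarrow> ?Y ! e \<in> Ob" for e using LY(1) fobj_Ob by fastforce
  have v: "e < length Y \<Longrightarrow> y1 ! e \<in> pts (?Y ! e) A \<and> str Y ! e \<in> pts (?Y ! e) [U] \<and> act f (y1 ! e) = act g (str Y ! e)" for e
  proof -
    assume e: "e < length Y"
    have "act f (y1 ! e) = fcomp f y1 ! e" using fcomp_nth[OF LY(2)] e by simp
    also have "\<dots> = fcomp g (str Y) ! e" using LY(4) by simp
    also have "\<dots> = act g (str Y ! e)" using fcomp_nth[OF LY(3)] e by simp
    finally show ?thesis using fmor_pt[OF LY(2)] fmor_pt[OF LY(3)] e by simp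
  qed
  define m where "m = map (\<lambda>e. THE z. z \<in> pts (?Y ! e) ?Z \<and> act z1 z = y1 ! e \<and> act (str Z) z = str Y ! e) [0..<length Y]"
  have mn: "e < length Y \<Longrightarrow> m ! e \<in> pts (?Y ! e) ?Z \<and> act z1 (m ! e) = y1 ! e \<and> act (str Z) (m ! e) = str Y ! e" for e
  proof -
    assume e: "e < length Y"
    have "\<exists>!z. z \<in> pts (?Y ! e) ?Z \<and> act z1 z = y1 ! e \<and> act (str Z) z = str Y ! e"
      using LZ(5)[OF obY[OF e]] v[OF e] by simp
    from theI'[OF this] show ?thesis unfolding m_def using e by simp
  qed
  have ml: "length m = length Y" by (simp add: m_def)
  have mf: "m \<in> fmor ?Y ?Z" unfolding fmor_iff using ml mn by simp
  have e1: "fcomp z1 m = y1"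
    by (rule nth_equalityI) (auto simp: fcomp_act ml mn fmor_len[OF LY(2)])
  have e2: "fcomp (str Z) m = str Y"
    by (rule nth_equalityI) (auto simp: fcomp_act ml mn)
  have ms: "m \<in> smor Y Z" using mf e2 smor_iff by simp
  show ?thesis
  proof (rule iso_crit[OF U s ms], intro ballI)
    fix W assume W: "W \<in> Ob"
    have A1: "w \<in> pts W ?Y \<Longrightarrow> act z1 (act m w) = act y1 w \<and> act (str Z) (act m w) = act (str Y) w" for w
      using act_act[OF LY(1) LZ(1) f(1) W mf LZ(2)] act_act[OF LY(1) LZ(1) fU W mf LZ(3)] e1 e2 by simp
    show "bij_betw (act m) (pts W ?Y) (pts W ?Z)"
      unfolding bij_betw_def inj_on_def
    proof (intro conjI ballI impI equalityI subsetI)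
      fix w w' assume w: "w \<in> pts W ?Y" "w' \<in> pts W ?Y" "act m w = act m w'"
      have eq: "act y1 w' = act y1 w" "act (str Y) w' = act (str Y) w" using A1[OF w(1)] A1[OF w(2)] w(3) by simp_all
      have x1: "act y1 w \<in> pts W A" "act (str Y) w \<in> pts W [U]"
        using act_pts[OF LY(1) f(1) W LY(2) w(1)] act_pts[OF LY(1) fU W LY(3) w(1)] .
      have xv: "act f (act y1 w) = act g (act (str Y) w)"
        using lpb_valid[OF ly f(1) fU f(2) W ff w(1)] .
      have ex: "\<exists>!z. z \<in> pts W ?Y \<and> act y1 z = act y1 w \<and> act (str Y) z = act (str Y) w"
        using LY(5)[OF W x1 xv] .
      have a: "w \<in> pts W ?Y \<and> act y1 w = act y1 w \<and> act (str Y) w = act (str Y) w" using w(1) by simp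
      have b: "w' \<in> pts W ?Y \<and> act y1 w' = act y1 w \<and> act (str Y) w' = act (str Y) w" using w(2) eq by simp
      show "w = w'" using ex1_uniq[OF ex a b] .
    next
      fix z assume "z \<in> act m ` pts W ?Y"
      thus "z \<in> pts W ?Z" using act_pts[OF LY(1) LZ(1) W mf] by blast
    next
      fix z assume z: "z \<in> pts W ?Z"
      have x: "act z1 z \<in> pts W A" "act (str Z) z \<in> pts W [U]"
        using act_pts[OF LZ(1) f(1) W LZ(2) z] act_pts[OF LZ(1) fU W LZ(3) z] .
      have xv: "act f (act z1 z) = act g (act (str Z) z)" using lpb_valid[OF lz f(1) fU f(2) W ff z] .
      obtain w where w: "w \<in> pts W ?Y" "act y1 w = act z1 z" "act (str Y) w = act (str Z) z"
        using LY(5)[OF W x xv] by metis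
      have "act m w \<in> pts W ?Z" using act_pts[OF LY(1) LZ(1) W mf w(1)] .
      hence a: "act m w \<in> pts W ?Z \<and> act z1 (act m w) = act z1 z \<and> act (str Z) (act m w) = act (str Z) z"
        using A1[OF w(1)] w by simp
      have b: "z \<in> pts W ?Z \<and> act z1 z = act z1 z \<and> act (str Z) z = act (str Z) z" using z by simp
      have "act m w = z" using ex1_uniq[OF LZ(5)[OF W x xv] a b] .
      thus "z \<in> act m ` pts W ?Y" using w(1) by blast
    qed
  qed
qed

end

definition cix :: "(nat \<Rightarrow> nat) \<Rightarrow> nat \<Rightarrow> nat \<Rightarrow> nat" where
  "cix L i l = (\<Sum>j<i. L j) + l"

lemma len_concat_upt:
  "(\<And>j. j < n \<Longrightarrow> length (F j) = L j) \<Longrightarrow> length (concat (map F [0..<n])) = (\<Sum>j<n. L j)"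
  by (induction n) auto

lemma cix_bound: "i < n \<Longrightarrow> l < L i \<Longrightarrow> cix L i l < (\<Sum>j<n. L j)"
proof (induction n)
  case 0 thus ?case by simp
next
  case (Suc n)
  show ?case
  proof (cases "i < n")
    case True thus ?thesis using Suc by simp
  next
    case False hence "i = n" using Suc by simp
    thus ?thesis using Suc by (simp add: cix_def)
  qed
qed

lemma nth_concat_cix:
  assumes "\<And>j. j < n \<Longrightarrow> length (F j) = L j" "i < n" "l < L i"
  shows "concat (map F [0..<n]) ! cix L i l = F i ! l"
  using assms
proof (induction n)
  case 0 thus ?case by simp
next
  case (Suc n)
  have len: "length (concat (map F [0..<n])) = (\<Sum>j<n. L j)" using len_concat_upt[of n F L] Suc.prems(1) by simp
  show ?case
  proof (cases "i < n")
    case True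
    hence "cix L i l < (\<Sum>j<n. L j)" using cix_bound Suc.prems by blast
    thus ?thesis using Suc True len by (simp add: nth_append)
  next
    case False hence "i = n" using Suc by simp
    thus ?thesis using len by (simp add: nth_append cix_def)
  qed
qed

lemma cix_surj: "k < (\<Sum>j<n. L j) \<Longrightarrow> \<exists>i<n. \<exists>l<L i. k = cix L i l"
proof (induction n)
  case 0 thus ?case by simp
next
  case (Suc n)
  show ?case
  proof (cases "k < (\<Sum>j<n. L j)")
    case True thus ?thesis using Suc.IH by (meson less_SucI)
  next
    case False
    hence "k = cix L n (k - (\<Sum>j<n. L j))" "k - (\<Sum>j<n. L j) < L n" using Suc.prems by (auto simp: cix_def)
    thus ?thesis by blast
  qed
qed

lemma cix_inj:
  assumes "l < L i" "l' < L i'" "cix L i l = cix L i' l'"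
  shows "i = i' \<and> l = l'"
proof -
  have *: "cix L a b < cix L a' b'" if "a < a'" "b < L a" for a a' b b'
  proof -
    have "cix L a b < (\<Sum>j<Suc a. L j)" using that by (simp add: cix_def)
    also have "\<dots> \<le> (\<Sum>j<a'. L j)" using that by (intro sum_mono2) auto
    also have "\<dots> \<le> cix L a' b'" by (simp add: cix_def)
    finally show ?thesis .
  qed
  have "i = i'" using *[of i i' l l'] *[of i' i l' l] assms by (metis linorder_neqE_nat less_irrefl)
  thus ?thesis using assms by (simp add: cix_def)
qed

context ocat
begin

definition Aof :: "('o \<times> 'm) list list \<Rightarrow> 'o list" where
  "Aof R = concat (map (\<lambda>i. map fst (R ! i)) [0..<length R])"
definition piof :: "('o \<times> 'm) list list \<Rightarrow> (nat \<times> 'm) list" where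
  "piof R = concat (map (\<lambda>i. map (\<lambda>p. (i, snd p)) (R ! i)) [0..<length R])"
definition y1of :: "('o \<times> 'm) list list \<Rightarrow> (nat \<times> 'm) list \<Rightarrow> (nat \<Rightarrow> (nat \<times> 'm) list) \<Rightarrow> nat \<Rightarrow> (nat \<times> 'm) list" where
  "y1of R q r1 n = concat (map (\<lambda>k. map (\<lambda>p. (cix (\<lambda>i. length (R ! i)) (fst (q ! k)) (fst p), snd p)) (r1 k)) [0..<n])"
definition y2of :: "(nat \<Rightarrow> (nat \<times> 'm) list) \<Rightarrow> nat \<Rightarrow> (nat \<times> 'm) list" where
  "y2of r2 n = concat (map (\<lambda>k. map (\<lambda>p. (k, snd p)) (r2 k)) [0..<n])"

lemma Aof_len: "length (Aof R) = (\<Sum>j<length R. length (R ! j))"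
  unfolding Aof_def by (rule len_concat_upt) simp
lemma piof_len: "length (piof R) = (\<Sum>j<length R. length (R ! j))"
  unfolding piof_def by (rule len_concat_upt) simp

lemma Aof_nth: "i < length R \<Longrightarrow> j < length (R ! i) \<Longrightarrow> Aof R ! cix (\<lambda>i. length (R ! i)) i j = fst (R ! i ! j)"
  unfolding Aof_def by (subst nth_concat_cix[where L="\<lambda>i. length (R ! i)"]) auto
lemma piof_nth: "i < length R \<Longrightarrow> j < length (R ! i) \<Longrightarrow> piof R ! cix (\<lambda>i. length (R ! i)) i j = (i, snd (R ! i ! j))"
  unfolding piof_def by (subst nth_concat_cix[where L="\<lambda>i. length (R ! i)"]) auto

lemma Aof_typ:
  assumes lenR: "length R = length S0" and sR: "\<forall>i<length S0. sobj (S0 ! i) (R ! i)"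
  shows "fobj (Aof R)" "piof R \<in> fmor (Aof R) S0"
proof -
  let ?L = "\<lambda>i. length (R ! i)"
  have dec: "t < length (Aof R) \<Longrightarrow> \<exists>i<length R. \<exists>j<?L i. t = cix ?L i j" for t
    using cix_surj Aof_len by metis
  show "fobj (Aof R)" unfolding fobj_nth
  proof (intro allI impI)
    fix t assume "t < length (Aof R)"
    then obtain i j where ij: "i < length R" "j < ?L i" "t = cix ?L i j" using dec by blast
    thus "Aof R ! t \<in> Ob" using Aof_nth sR lenR unfolding sobj_nth by auto
  qed
  show "piof R \<in> fmor (Aof R) S0" unfolding fmor_iff
  proof (intro conjI allI impI)
    show "length (piof R) = length (Aof R)" using Aof_len piof_len by simp
    fix t assume "t < length (Aof R)"
    then obtain i j where ij: "i < length R" "j < ?L i" "t = cix ?L i j" using dec by blast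
    thus "piof R ! t \<in> pts (Aof R ! t) S0" using Aof_nth piof_nth sR lenR unfolding sobj_nth pts_def by auto
  qed
qed


lemma core:
  assumes fS0: "fobj S0" and lenR: "length R = length S0" and sR: "\<forall>i<length S0. sobj (S0 ! i) (R ! i)"
    and fB: "fobj B" and q: "q \<in> fmor B S0"
    and lp: "\<forall>k<length B. lpb (map fst (R ! fst (q ! k))) [B ! k] (str (R ! fst (q ! k))) [(0, snd (q ! k))] (P k) (r1 k) (r2 k)"
  shows "lpb (Aof R) B (piof R) q (concat (map P [0..<length B])) (y1of R q r1 (length B)) (y2of r2 (length B))"
proof -
  define n where "n = length B"
  define L where "L = (\<lambda>i. length (R ! i))"
  define LP where "LP = (\<lambda>k. length (P k))"
  define Y where "Y = concat (map P [0..<n])"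
  define y1 where "y1 = y1of R q r1 n"
  define y2 where "y2 = y2of r2 n"
  have qk: "k < n \<Longrightarrow> fst (q ! k) < length S0 \<and> snd (q ! k) \<in> Hom (B ! k) (S0 ! fst (q ! k))" for k
    using fmor_pt[OF q] unfolding n_def pts_def by auto
  have LPk: "k < n \<Longrightarrow> lpb (map fst (R ! fst (q ! k))) [B ! k] (str (R ! fst (q ! k))) [(0, snd (q ! k))] (P k) (r1 k) (r2 k)" for k
    using lp n_def by auto
  have lens: "k < n \<Longrightarrow> length (r1 k) = LP k \<and> length (r2 k) = LP k" for k
    using lpbD(2,3)[OF LPk] fmor_len unfolding LP_def by metis
  have Ylen: "length Y = (\<Sum>k<n. LP k)" unfolding Y_def LP_def by (rule len_concat_upt) simp
  have y1len: "length y1 = (\<Sum>k<n. LP k)" unfolding y1_def y1of_def by (rule len_concat_upt) (simp add: lens)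
  have y2len: "length y2 = (\<Sum>k<n. LP k)" unfolding y2_def y2of_def by (rule len_concat_upt) (simp add: lens)
  have Ynth: "Y ! cix LP k l = P k ! l" if "k < n" "l < LP k" for k l
    unfolding Y_def using that by (subst nth_concat_cix[where L=LP]) (auto simp: LP_def)
  have y1nth: "y1 ! cix LP k l = (cix L (fst (q ! k)) (fst (r1 k ! l)), snd (r1 k ! l))" if "k < n" "l < LP k" for k l
    unfolding y1_def y1of_def L_def using that lens by (subst nth_concat_cix[where L=LP]) auto
  have y2nth: "y2 ! cix LP k l = (k, snd (r2 k ! l))" if "k < n" "l < LP k" for k l
    unfolding y2_def y2of_def using that lens by (subst nth_concat_cix[where L=LP]) auto
  have decY: "t < length Y \<Longrightarrow> \<exists>k<n. \<exists>l<LP k. t = cix LP k l" for t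
    using cix_surj Ylen by metis
  have decA: "t < length (Aof R) \<Longrightarrow> \<exists>i<length R. \<exists>j<L i. t = cix L i j" for t
    using cix_surj Aof_len unfolding L_def by metis
  have r1pt: "fst (r1 k ! l) < L (fst (q ! k)) \<and> snd (r1 k ! l) \<in> Hom (P k ! l) (fst (R ! fst (q ! k) ! fst (r1 k ! l)))"
    if "k < n" "l < LP k" for k l
    using fmor_pt[OF lpbD(2)[OF LPk[OF that(1)]], of l] that unfolding LP_def L_def pts_def by auto
  have r2pt: "fst (r2 k ! l) = 0 \<and> snd (r2 k ! l) \<in> Hom (P k ! l) (B ! k)" if "k < n" "l < LP k" for k l
  proof -
    have "r2 k ! l \<in> pts (P k ! l) [B ! k]" using fmor_pt[OF lpbD(3)[OF LPk[OF that(1)]], of l] that unfolding LP_def by auto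
    hence "fst (r2 k ! l) = 0" "snd (r2 k ! l) \<in> Hom (P k ! l) ([B ! k] ! fst (r2 k ! l))" unfolding pts_def by auto
    thus ?thesis by simp
  qed
  have sq: "cmp (snd (R ! fst (q ! k) ! fst (r1 k ! l))) (snd (r1 k ! l)) = cmp (snd (q ! k)) (snd (r2 k ! l))"
    if "k < n" "l < LP k" for k l
  proof -
    have "fcomp (str (R ! fst (q ! k))) (r1 k) ! l = fcomp [(0, snd (q ! k))] (r2 k) ! l"
      using lpbD(4)[OF LPk[OF that(1)]] by simp
    hence "act (str (R ! fst (q ! k))) (r1 k ! l) = act [(0, snd (q ! k))] (r2 k ! l)"
      using lens[OF that(1)] that(2) by (simp add: fcomp_act)
    thus ?thesis using r1pt[OF that] r2pt[OF that] unfolding act_def L_def by (simp add: str_nth)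
  qed
  have fY: "fobj Y" unfolding fobj_nth
  proof (intro allI impI)
    fix t assume "t < length Y"
    then obtain k l where kl: "k < n" "l < LP k" "t = cix LP k l" using decY by blast
    thus "Y ! t \<in> Ob" using Ynth fobj_Ob[OF lpbD(1)[OF LPk[OF kl(1)]]] unfolding LP_def by auto
  qed
  have Aty: "fobj (Aof R)" "piof R \<in> fmor (Aof R) S0" using Aof_typ[OF lenR sR] by auto
  have y1f: "y1 \<in> fmor Y (Aof R)" unfolding fmor_iff
  proof (intro conjI allI impI)
    show "length y1 = length Y" using y1len Ylen by simp
    fix t assume "t < length Y"
    then obtain k l where kl: "k < n" "l < LP k" "t = cix LP k l" using decY by blast
    have i: "fst (q ! k) < length R" using qk[OF kl(1)] lenR by simp
    show "y1 ! t \<in> pts (Y ! t) (Aof R)"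
      using kl y1nth Ynth r1pt[OF kl(1,2)] Aof_nth[OF i] cix_bound[OF i, of "fst (r1 k ! l)" L] Aof_len
      unfolding pts_def L_def by simp
  qed
  have y2f: "y2 \<in> fmor Y B" unfolding fmor_iff
  proof (intro conjI allI impI)
    show "length y2 = length Y" using y2len Ylen by simp
    fix t assume "t < length Y"
    then obtain k l where kl: "k < n" "l < LP k" "t = cix LP k l" using decY by blast
    show "y2 ! t \<in> pts (Y ! t) B"
      using kl y2nth Ynth r2pt[OF kl(1,2)] unfolding pts_def n_def by simp
  qed
  have comm: "fcomp (piof R) y1 = fcomp q y2"
  proof (rule nth_equalityI)
    show "length (fcomp (piof R) y1) = length (fcomp q y2)" using y1len y2len by (simp add: fcomp_act)
    fix t assume "t < length (fcomp (piof R) y1)"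
    hence "t < length Y" using y1len Ylen by (simp add: fcomp_act)
    then obtain k l where kl: "k < n" "l < LP k" "t = cix LP k l" using decY by blast
    have i: "fst (q ! k) < length R" using qk[OF kl(1)] lenR by simp
    have "fcomp (piof R) y1 ! t = act (piof R) (y1 ! t)" using kl y1len cix_bound[of k n l LP] by (simp add: fcomp_act)
    also have "\<dots> = (fst (q ! k), cmp (snd (R ! fst (q ! k) ! fst (r1 k ! l))) (snd (r1 k ! l)))"
      using kl y1nth piof_nth[OF i] r1pt[OF kl(1,2)] unfolding act_def L_def by simp
    also have "\<dots> = act q (y2 ! t)" using kl y2nth sq[OF kl(1,2)] unfolding act_def by simp
    also have "\<dots> = fcomp q y2 ! t" using kl y2len cix_bound[of k n l LP] by (simp add: fcomp_act)
    finally show "fcomp (piof R) y1 ! t = fcomp q y2 ! t" .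
  qed
  have univ: "\<exists>!z. z \<in> pts W Y \<and> act y1 z = x \<and> act y2 z = y"
    if W: "W \<in> Ob" and x: "x \<in> pts W (Aof R)" and y: "y \<in> pts W B" and e: "act (piof R) x = act q y" for W x y
  proof -
    obtain t g where xt: "x = (t, g)" by (cases x)
    obtain k ee where yk: "y = (k, ee)" by (cases y)
    have t: "t < length (Aof R)" "g \<in> Hom W (Aof R ! t)" using x xt unfolding pts_def by auto
    have k: "k < n" "ee \<in> Hom W (B ! k)" using y yk unfolding pts_def n_def by auto
    obtain i j where ij: "i < length R" "j < L i" "t = cix L i j" using decA[OF t(1)] by blast
    have "act (piof R) x = (i, cmp (snd (R ! i ! j)) g)" using xt ij piof_nth unfolding act_def L_def by simp
    moreover have "act q y = (fst (q ! k), cmp (snd (q ! k)) ee)" using yk unfolding act_def by simp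
    ultimately have ik: "i = fst (q ! k)" and eq: "cmp (snd (R ! i ! j)) g = cmp (snd (q ! k)) ee" using e by auto
    note LL = lpbD[OF LPk[OF k(1)]]
    have x': "(j, g) \<in> pts W (map fst (R ! fst (q ! k)))"
      using ij t(2) Aof_nth[OF ij(1)] ik unfolding pts_def L_def by simp
    have y': "(0, ee) \<in> pts W [B ! k]" using k unfolding pts_def by simp
    have e': "act (str (R ! fst (q ! k))) (j, g) = act [(0, snd (q ! k))] (0, ee)"
      using eq ij ik unfolding act_def L_def by (simp add: str_nth)
    obtain z0 where z0: "z0 \<in> pts W (P k)" "act (r1 k) z0 = (j, g)" "act (r2 k) z0 = (0, ee)"
      and z0u: "\<And>z'. z' \<in> pts W (P k) \<and> act (r1 k) z' = (j, g) \<and> act (r2 k) z' = (0, ee) \<Longrightarrow> z' = z0"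
      using LL(5)[OF W x' y' e'] by metis
    obtain l h' where lh: "z0 = (l, h')" by (cases z0)
    have l: "l < LP k" "h' \<in> Hom W (P k ! l)" using z0(1) lh unfolding pts_def LP_def by auto
    have r1l: "fst (r1 k ! l) = j" "cmp (snd (r1 k ! l)) h' = g" using z0(2) lh unfolding act_def by auto
    have r2l: "cmp (snd (r2 k ! l)) h' = ee" using z0(3) lh unfolding act_def by auto
    show ?thesis
    proof (rule ex1I[of _ "(cix LP k l, h')"])
      show "(cix LP k l, h') \<in> pts W Y \<and> act y1 (cix LP k l, h') = x \<and> act y2 (cix LP k l, h') = y"
        using l k Ynth y1nth y2nth r1l r2l cix_bound[of k n l LP] Ylen xt yk ij ik
        unfolding pts_def act_def by simp
      fix z' assume z': "z' \<in> pts W Y \<and> act y1 z' = x \<and> act y2 z' = y"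
      obtain t' h2 where th: "z' = (t', h2)" by (cases z')
      have t': "t' < length Y" "h2 \<in> Hom W (Y ! t')" using z' th unfolding pts_def by auto
      obtain k' l' where kl': "k' < n" "l' < LP k'" "t' = cix LP k' l'" using decY[OF t'(1)] by blast
      have "act y2 z' = (k', cmp (snd (r2 k' ! l')) h2)" using th kl' y2nth unfolding act_def by simp
      hence kk: "k' = k" and e2: "cmp (snd (r2 k ! l')) h2 = ee" using z' yk by auto
      have "act y1 z' = (cix L (fst (q ! k)) (fst (r1 k ! l')), cmp (snd (r1 k ! l')) h2)"
        using th kl' kk y1nth unfolding act_def by simp
      hence c1: "cix L i (fst (r1 k ! l')) = cix L i j" and e1: "cmp (snd (r1 k ! l')) h2 = g"
        using z' xt ij ik by auto
      have "fst (r1 k ! l') = j" using cix_inj[OF _ ij(2) c1] r1pt[OF k(1)] kl' kk ik by blast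
      moreover have "fst (r2 k ! l') = 0" using r2pt[OF k(1)] kl' kk by blast
      ultimately have "(l', h2) \<in> pts W (P k) \<and> act (r1 k) (l', h2) = (j, g) \<and> act (r2 k) (l', h2) = (0, ee)"
        using kl' kk t' Ynth e1 e2 unfolding pts_def act_def LP_def by simp
      hence "(l', h2) = (l, h')" using z0u lh by simp
      thus "z' = (cix LP k l, h')" using th kl' kk by simp
    qed
  qed
  show ?thesis unfolding lpb_def
    using fY y1f y2f comm univ unfolding Y_def y1_def y2_def n_def by blast
qed

end

context ocat
begin

lemma map2_nth_form: "length ys = length xs \<Longrightarrow> map2 f xs ys = map (\<lambda>i. f (xs ! i) (ys ! i)) [0..<length xs]"
  by (rule nth_equalityI) auto

lemma Ind_len[simp]: "length (Ind a T) = length T"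
  by (simp add: Ind_def)
lemma Ind_nth: "l < length T \<Longrightarrow> Ind a T ! l = (fst (T ! l), cmp a (snd (T ! l)))"
  by (simp add: Ind_def case_prod_beta)
lemma Ind_map: "Ind a T = map (\<lambda>p. (fst p, cmp a (snd p))) T"
  by (simp add: Ind_def case_prod_beta)

lemma coprod_alt: "length Ts = length S \<Longrightarrow>
   coprod_over S Ts = concat (map (\<lambda>i. Ind (snd (S ! i)) (Ts ! i)) [0..<length S])"
  unfolding coprod_over_def by (simp add: map2_nth_form case_prod_beta)

lemma coprod_fst: "length Ts = length S \<Longrightarrow> map fst (coprod_over S Ts) = Aof Ts"
  unfolding Aof_def by (simp add: coprod_alt map_concat Ind_map comp_def)

lemma str_concat: "str (concat xs) = concat (map str xs)"
  by (induction xs) (auto simp: str_def)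

lemma fcomp_concat: "fcomp g (concat xs) = concat (map (fcomp g) xs)"
  by (induction xs) (auto simp: fcomp_act)

lemma coprod_str:
  assumes l: "length Ts = length S"
  shows "str (coprod_over S Ts) = fcomp (str S) (piof Ts)"
proof -
  have blk: "str (Ind (snd (S ! i)) (Ts ! i)) = fcomp (str S) (map (\<lambda>p. (i, snd p)) (Ts ! i))"
    if i: "i < length S" for i
    using i by (auto simp: fcomp_act str_def Ind_map act_def case_prod_beta)
  have "map (\<lambda>i. str (Ind (snd (S ! i)) (Ts ! i))) [0..<length S]
      = map (\<lambda>i. fcomp (str S) (map (\<lambda>p. (i, snd p)) (Ts ! i))) [0..<length S]"
    by (rule map_cong) (auto simp: blk)
  thus ?thesis unfolding piof_def coprod_alt[OF l] str_concat fcomp_concat l map_map comp_def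
    by (rule arg_cong)
qed

lemma coprod_len: "length Ts = length S \<Longrightarrow> length (coprod_over S Ts) = (\<Sum>j<length Ts. length (Ts ! j))"
  using coprod_fst[of Ts S] Aof_len[of Ts] by (metis length_map)

lemma sobj_coprod:
  assumes V: "V \<in> Ob" and s: "sobj V S" and l: "length Ts = length S"
    and t: "\<forall>i<length S. sobj (fst (S ! i)) (Ts ! i)"
  shows "sobj V (coprod_over S Ts)"
  unfolding sobj_def
proof (intro ballI)
  fix x assume "x \<in> set (coprod_over S Ts)"
  then obtain i where i: "i < length S" and x: "x \<in> set (Ind (snd (S ! i)) (Ts ! i))"
    using l by (auto simp: coprod_alt)
  obtain l where lt: "l < length (Ts ! i)" "x = (fst (Ts ! i ! l), cmp (snd (S ! i)) (snd (Ts ! i ! l)))"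
    using x by (auto simp: in_set_conv_nth Ind_nth)
  have a: "fst (S ! i) \<in> Ob" "snd (S ! i) \<in> Hom (fst (S ! i)) V" using s i unfolding sobj_nth by auto
  have b: "fst (Ts ! i ! l) \<in> Ob" "snd (Ts ! i ! l) \<in> Hom (fst (Ts ! i ! l)) (fst (S ! i))"
    using t i lt(1) unfolding sobj_nth by auto
  show "case x of (U, f) \<Rightarrow> U \<in> Ob \<and> f \<in> Hom U V"
    using lt(2) a b V by (auto intro: comp_hom)
qed

definition okc :: "('o \<Rightarrow> ('o \<times> 'm) list set) \<Rightarrow> bool" where
  "okc K \<longleftrightarrow> (\<forall>V. V \<notin> Ob \<longrightarrow> K V = {}) \<and> (\<forall>V\<in>Ob. \<forall>S\<in>K V. sobj V S)"
definition isoc :: "('o \<Rightarrow> ('o \<times> 'm) list set) \<Rightarrow> bool" where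
  "isoc K \<longleftrightarrow> (\<forall>V\<in>Ob. \<forall>S S'. S \<in> K V \<and> sobj V S' \<and> siso S S' \<longrightarrow> S' \<in> K V)"
definition resc :: "('o \<Rightarrow> ('o \<times> 'm) list set) \<Rightarrow> bool" where
  "resc K \<longleftrightarrow> (\<forall>V\<in>Ob. \<forall>U\<in>Ob. \<forall>a\<in>Hom U V. \<forall>S\<in>K V. \<forall>P p1 p2.
        is_pullback (map fst S) [U] (str S) [(0,a)] P p1 p2 \<longrightarrow> zip P (map snd p2) \<in> K U)"
definition termc :: "('o \<Rightarrow> ('o \<times> 'm) list set) \<Rightarrow> bool" where
  "termc K \<longleftrightarrow> (\<forall>V\<in>Ob. K V \<noteq> {} \<longrightarrow> terminal V \<in> K V)"
definition coprc :: "('o \<Rightarrow> ('o \<times> 'm) list set) \<Rightarrow> bool" where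
  "coprc K \<longleftrightarrow> (\<forall>V\<in>Ob. \<forall>S\<in>K V. \<forall>Ts. length Ts = length S \<and> (\<forall>i<length S. Ts!i \<in> K (fst (S!i)))
        \<longrightarrow> coprod_over S Ts \<in> K V)"

lemma wis_iff: "is_wIndSys K \<longleftrightarrow> okc K \<and> isoc K \<and> resc K \<and> termc K \<and> coprc K"
  unfolding is_wIndSys_def okc_def isoc_def resc_def termc_def coprc_def by blast

lemma okcD: "okc K \<Longrightarrow> V \<in> Ob \<Longrightarrow> S \<in> K V \<Longrightarrow> sobj V S"
  unfolding okc_def by blast
lemma okcOb: "okc K \<Longrightarrow> S \<in> K V \<Longrightarrow> V \<in> Ob"
  unfolding okc_def by blast

lemma orbD:
  assumes "fobj A" "fobj B" "fobj C" "f \<in> fmor A C" "g \<in> fmor B C"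
  shows "\<exists>P p1 p2. is_pullback A B f g P p1 p2"
  using orb assms unfolding orbital_def by blast

lemma a_fmor: "a \<in> Hom U V \<Longrightarrow> [(0, a)] \<in> fmor [U] [V]"
  by (simp add: fmor_iff pts_def)

lemma pbs_choice:
  assumes "\<forall>k<n. \<exists>P p1 p2. Q k P p1 p2"
  shows "\<exists>Pf r1 r2. \<forall>k<n. Q k (Pf k) (r1 k) (r2 k)"
proof -
  have "\<forall>k. \<exists>t. k < n \<longrightarrow> Q k (fst t) (fst (snd t)) (snd (snd t))" using assms by force
  then obtain T where "\<forall>k. k < n \<longrightarrow> Q k (fst (T k)) (fst (snd (T k))) (snd (snd (T k)))" by metis
  thus ?thesis
    by (intro exI[of _ "\<lambda>k. fst (T k)"] exI[of _ "\<lambda>k. fst (snd (T k))"] exI[of _ "\<lambda>k. snd (snd (T k))"]) simp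
qed

lemma piof_zip:
  assumes "\<forall>k<n. length (r2 k) = length (Pf k)"
  shows "piof (map (\<lambda>k. zip (Pf k) (map snd (r2 k))) [0..<n]) = y2of r2 n"
  unfolding piof_def y2of_def using assms
  by (auto intro!: arg_cong[where f=concat] nth_equalityI)

lemma Aof_zip:
  assumes "\<forall>k<n. length (r2 k) = length (Pf k)"
  shows "Aof (map (\<lambda>k. zip (Pf k) (map snd (r2 k))) [0..<n]) = concat (map Pf [0..<n])"
  unfolding Aof_def using assms
  by (auto intro!: arg_cong[where f=concat])

end

context ocat
begin

lemma Cl_stepE:
  assumes "X \<in> Cl_step C E V"
  obtains S Ts where "V \<in> Ob" "sobj V X" "S \<in> C V" "length Ts = length S"
    "\<forall>i<length S. Ts ! i \<in> E (fst (S ! i))" "siso (coprod_over S Ts) X"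
  using assms unfolding Cl_step_def by (auto split: if_splits)

lemma Cl_stepI:
  assumes "V \<in> Ob" "sobj V X" "S \<in> C V" "length Ts = length S"
    "\<forall>i<length S. Ts ! i \<in> E (fst (S ! i))" "siso (coprod_over S Ts) X"
  shows "X \<in> Cl_step C E V"
  using assms unfolding Cl_step_def by auto

lemma res_Cl_step:
  assumes oC: "okc C" and rC: "resc C" and oE: "okc E" and rE: "resc E"
  shows "resc (Cl_step C E)"
  unfolding resc_def
proof (intro ballI allI impI)
  fix V U a X P p1 p2
  assume V: "V \<in> Ob" and U: "U \<in> Ob" and a: "a \<in> Hom U V" and X: "X \<in> Cl_step C E V"
    and pb: "is_pullback (map fst X) [U] (str X) [(0, a)] P p1 p2"
  obtain S Ts where sX: "sobj V X" and SC: "S \<in> C V" and lT: "length Ts = length S"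
    and TE: "\<forall>i<length S. Ts ! i \<in> E (fst (S ! i))" and iso: "siso (coprod_over S Ts) X"
    using Cl_stepE[OF X] by metis
  have sS: "sobj V S" using okcD[OF oC V SC] .
  let ?S0 = "map fst S"
  have fS0: "fobj ?S0" using fobj_sobj[OF sS] .
  have fU: "fobj [U]" and fV: "fobj [V]" using U V fobj_single by auto
  have aF: "[(0, a)] \<in> fmor [U] [V]" using a_fmor[OF a] .
  have obSi: "i < length S \<Longrightarrow> fst (S ! i) \<in> Ob" for i using sS unfolding sobj_nth by auto
  have sT: "\<forall>i<length S. sobj (fst (S ! i)) (Ts ! i)" using okcD[OF oE obSi] TE by blast
  obtain P0 q1 q2 where pb0: "is_pullback ?S0 [U] (str S) [(0, a)] P0 q1 q2"
    using orbD[OF fS0 fU fV str_fmor[OF sS] aF] by blast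
  note l0 = pb_lpb[OF pb0]
  note L0 = lpbD[OF l0]
  define S' where "S' = zip P0 (map snd q2)"
  have S'C: "S' \<in> C U" using rC V U a SC pb0 unfolding resc_def S'_def by blast
  have q1k: "k < length P0 \<Longrightarrow> fst (q1 ! k) < length S \<and> snd (q1 ! k) \<in> Hom (P0 ! k) (fst (S ! fst (q1 ! k)))" for k
  proof -
    assume k: "k < length P0"
    have "q1 ! k \<in> pts (P0 ! k) ?S0" using fmor_pt[OF L0(2) k] .
    hence "fst (q1 ! k) < length S" "snd (q1 ! k) \<in> Hom (P0 ! k) (?S0 ! fst (q1 ! k))" unfolding pts_def by auto
    thus ?thesis by simp
  qed
  have obP0: "k < length P0 \<Longrightarrow> P0 ! k \<in> Ob" for k using fobj_Ob[OF L0(1)] .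
  have "\<forall>k<length P0. \<exists>PP r1 r2. is_pullback (map fst (Ts ! fst (q1 ! k))) [P0 ! k] (str (Ts ! fst (q1 ! k)))
            [(0, snd (q1 ! k))] PP r1 r2"
  proof (intro allI impI)
    fix k assume k: "k < length P0"
    have i: "fst (q1 ! k) < length S" and h: "snd (q1 ! k) \<in> Hom (P0 ! k) (fst (S ! fst (q1 ! k)))" using q1k[OF k] by auto
    show "\<exists>PP r1 r2. is_pullback (map fst (Ts ! fst (q1 ! k))) [P0 ! k] (str (Ts ! fst (q1 ! k))) [(0, snd (q1 ! k))] PP r1 r2"
      using orbD[OF fobj_sobj[OF sT[rule_format, OF i]] fobj_single[OF obP0[OF k]] fobj_single[OF obSi[OF i]]
          str_fmor[OF sT[rule_format, OF i]] a_fmor[OF h]] .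
  qed
  then obtain Pf r1 r2 where pbk: "\<forall>k<length P0. is_pullback (map fst (Ts ! fst (q1 ! k))) [P0 ! k] (str (Ts ! fst (q1 ! k)))
            [(0, snd (q1 ! k))] (Pf k) (r1 k) (r2 k)"
    using pbs_choice[where Q="\<lambda>k PP r1 r2. is_pullback (map fst (Ts ! fst (q1 ! k))) [P0 ! k] (str (Ts ! fst (q1 ! k)))
            [(0, snd (q1 ! k))] PP r1 r2"] by blast
  have lpk: "\<forall>k<length P0. lpb (map fst (Ts ! fst (q1 ! k))) [P0 ! k] (str (Ts ! fst (q1 ! k))) [(0, snd (q1 ! k))] (Pf k) (r1 k) (r2 k)"
    using pbk pb_lpb by blast
  have lr2: "\<forall>k<length P0. length (r2 k) = length (Pf k)" using lpk lpbD(3) fmor_len by blast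
  define Ts' where "Ts' = map (\<lambda>k. zip (Pf k) (map snd (r2 k))) [0..<length P0]"
  have lq2: "length q2 = length P0" using fmor_len[OF L0(3)] .
  have lS': "length S' = length P0" using lq2 by (simp add: S'_def)
  have lT': "length Ts' = length S'" using lS' by (simp add: Ts'_def)
  have S'fst: "k < length P0 \<Longrightarrow> fst (S' ! k) = P0 ! k" for k using lq2 by (simp add: S'_def)
  have T'E: "\<forall>k<length S'. Ts' ! k \<in> E (fst (S' ! k))"
  proof (intro allI impI)
    fix k assume "k < length S'"
    hence k: "k < length P0" using lS' by simp
    have i: "fst (q1 ! k) < length S" and h: "snd (q1 ! k) \<in> Hom (P0 ! k) (fst (S ! fst (q1 ! k)))" using q1k[OF k] by auto
    have "zip (Pf k) (map snd (r2 k)) \<in> E (P0 ! k)"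
      using rE obSi[OF i] obP0[OF k] h TE i pbk k unfolding resc_def by blast
    thus "Ts' ! k \<in> E (fst (S' ! k))" using k S'fst by (simp add: Ts'_def)
  qed
  define Y where "Y = coprod_over S' Ts'"
  define Z where "Z = zip P (map snd p2)"
  note LP = lpbD[OF pb_lpb[OF pb]]
  have sS': "sobj U S'" unfolding S'_def using sobj_zip[OF L0(1) L0(3)] .
  have sT': "\<forall>k<length S'. sobj (fst (S' ! k)) (Ts' ! k)"
    using T'E okcD[OF oE] sS' unfolding sobj_nth by blast
  have sY: "sobj U Y" unfolding Y_def using sobj_coprod[OF U sS' lT' sT'] .
  have sZ: "sobj U Z" unfolding Z_def using sobj_zip[OF LP(1) LP(3)] .
  \<comment> \<open>Y is a pullback of coprod_over S Ts\<close>
  have lenR: "length Ts = length ?S0" using lT by simp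
  have sR: "\<forall>i<length ?S0. sobj (?S0 ! i) (Ts ! i)" using sT by simp
  have core1: "lpb (Aof Ts) P0 (piof Ts) q1 (concat (map Pf [0..<length P0])) (y1of Ts q1 r1 (length P0)) (y2of r2 (length P0))"
    using core[OF fS0 lenR sR L0(1) L0(2) lpk] .
  have Aty: "fobj (Aof Ts)" "piof Ts \<in> fmor (Aof Ts) ?S0" using Aof_typ[OF lenR sR] by auto
  have lY: "lpb (Aof Ts) [U] (fcomp (str S) (piof Ts)) [(0, a)] (concat (map Pf [0..<length P0]))
      (y1of Ts q1 r1 (length P0)) (fcomp q2 (y2of r2 (length P0)))"
    using lpb_paste[OF l0 core1 fS0 Aty(1) fU fV str_fmor[OF sS] aF Aty(2)] .
  define X' where "X' = coprod_over S Ts"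
  have X'1: "map fst X' = Aof Ts" "str X' = fcomp (str S) (piof Ts)"
    unfolding X'_def using coprod_fst[OF lT] coprod_str[OF lT] by auto
  have "map fst Y = Aof Ts'" unfolding Y_def by (rule coprod_fst[OF lT'])
  also have "\<dots> = concat (map Pf [0..<length P0])" unfolding Ts'_def by (rule Aof_zip[OF lr2])
  finally have Y1: "map fst Y = concat (map Pf [0..<length P0])" .
  have "str Y = fcomp (str S') (piof Ts')" unfolding Y_def by (rule coprod_str[OF lT'])
  also have "piof Ts' = y2of r2 (length P0)" unfolding Ts'_def by (rule piof_zip[OF lr2])
  also have "str S' = q2" unfolding S'_def by (rule str_zip(1)[OF L0(3)])
  finally have Y2: "str Y = fcomp q2 (y2of r2 (length P0))" .
  have lY': "lpb (map fst X') [U] (str X') [(0, a)] (map fst Y) (y1of Ts q1 r1 (length P0)) (str Y)"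
    using lY X'1 Y1 Y2 by simp
  have sX': "sobj V X'" unfolding X'_def using sobj_coprod[OF V sS lT sT] .
  obtain m m' where m: "m \<in> smor X' X" and m': "m' \<in> smor X X'"
    and e1: "fcomp m' m = fid (map fst X')" and e2: "fcomp m m' = fid (map fst X)"
    using iso unfolding siso_def X'_def by blast
  have fX: "fobj (map fst X)" "fobj (map fst X')" using fobj_sobj sX sX' by auto
  have lY'': "lpb (map fst X) [U] (str X) [(0, a)] (map fst Y) (fcomp m (y1of Ts q1 r1 (length P0))) (str Y)"
    using lpb_iso[OF lY' fX(2,1) fU fV _ _ e1 e2 str_fmor[OF sX] _ aF] m m' smor_iff by blast
  have lZ: "lpb (map fst X) [U] (str X) [(0, a)] (map fst Z) p1 (str Z)"
    using pb_lpb[OF pb] str_zip[OF LP(3)] unfolding Z_def by simp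
  have "siso Y Z" using lpb_unique[OF U sY sZ fX(1) fV str_fmor[OF sX] aF lY'' lZ] .
  thus "zip P (map snd p2) \<in> Cl_step C E U"
    using Cl_stepI[of U Z S' C Ts' E, OF U sZ S'C lT' T'E] unfolding Z_def Y_def by blast
qed

end

context ocat
begin

lemma transport:
  assumes oK: "okc K" and rK: "resc K" and V: "V \<in> Ob" and sS: "sobj V S" and sY: "sobj V Y"
    and iso: "siso Y S" and lR: "length R = length S" and RK: "\<forall>j<length S. R ! j \<in> K (fst (S ! j))"
  shows "\<exists>R'. length R' = length Y \<and> (\<forall>e<length Y. R' ! e \<in> K (fst (Y ! e))) \<and>
     siso (coprod_over Y R') (coprod_over S R)"
proof -
  let ?S0 = "map fst S" and ?Y0 = "map fst Y"
  obtain m where m: "m \<in> smor Y S" and mb: "\<forall>W\<in>Ob. bij_betw (act m) (pts W ?Y0) (pts W ?S0)"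
    using siso_bij[OF V sY sS iso] by blast
  have mf: "m \<in> fmor ?Y0 ?S0" and ms: "fcomp (str S) m = str Y" using m smor_iff by auto
  have fS0: "fobj ?S0" and fY0: "fobj ?Y0" using fobj_sobj sS sY by auto
  have fV: "fobj [V]" using fobj_single[OF V] .
  have obS: "i < length S \<Longrightarrow> fst (S ! i) \<in> Ob" for i using sS unfolding sobj_nth by auto
  have obY: "e < length Y \<Longrightarrow> fst (Y ! e) \<in> Ob" for e using sY unfolding sobj_nth by auto
  have sR: "\<forall>i<length S. sobj (fst (S ! i)) (R ! i)" using okcD[OF oK obS] RK by blast
  have me: "e < length Y \<Longrightarrow> fst (m ! e) < length S \<and> snd (m ! e) \<in> Hom (fst (Y ! e)) (fst (S ! fst (m ! e)))" for e
  proof -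
    assume e: "e < length Y"
    have "m ! e \<in> pts (?Y0 ! e) ?S0" using fmor_pt[OF mf] e by simp
    hence "fst (m ! e) < length S" "snd (m ! e) \<in> Hom (?Y0 ! e) (?S0 ! fst (m ! e))" unfolding pts_def by auto
    thus ?thesis using e by simp
  qed
  have "\<forall>e<length Y. \<exists>PP r1 r2. is_pullback (map fst (R ! fst (m ! e))) [fst (Y ! e)] (str (R ! fst (m ! e)))
            [(0, snd (m ! e))] PP r1 r2"
  proof (intro allI impI)
    fix e assume e: "e < length Y"
    have i: "fst (m ! e) < length S" and h: "snd (m ! e) \<in> Hom (fst (Y ! e)) (fst (S ! fst (m ! e)))" using me[OF e] by auto
    show "\<exists>PP r1 r2. is_pullback (map fst (R ! fst (m ! e))) [fst (Y ! e)] (str (R ! fst (m ! e))) [(0, snd (m ! e))] PP r1 r2"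
      using orbD[OF fobj_sobj[OF sR[rule_format, OF i]] fobj_single[OF obY[OF e]] fobj_single[OF obS[OF i]]
          str_fmor[OF sR[rule_format, OF i]] a_fmor[OF h]] .
  qed
  then obtain Pf r1 r2 where pbk: "\<forall>e<length Y. is_pullback (map fst (R ! fst (m ! e))) [fst (Y ! e)] (str (R ! fst (m ! e)))
            [(0, snd (m ! e))] (Pf e) (r1 e) (r2 e)"
    using pbs_choice[where Q="\<lambda>e PP r1 r2. is_pullback (map fst (R ! fst (m ! e))) [fst (Y ! e)] (str (R ! fst (m ! e)))
            [(0, snd (m ! e))] PP r1 r2"] by blast
  have lpk: "\<forall>e<length ?Y0. lpb (map fst (R ! fst (m ! e))) [?Y0 ! e] (str (R ! fst (m ! e))) [(0, snd (m ! e))] (Pf e) (r1 e) (r2 e)"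
    using pbk pb_lpb by simp
  have lr2: "\<forall>e<length Y. length (r2 e) = length (Pf e)" using pbk pb_lpb lpbD(3) fmor_len by blast
  define R' where "R' = map (\<lambda>e. zip (Pf e) (map snd (r2 e))) [0..<length Y]"
  have lR': "length R' = length Y" by (simp add: R'_def)
  have R'K: "\<forall>e<length Y. R' ! e \<in> K (fst (Y ! e))"
  proof (intro allI impI)
    fix e assume e: "e < length Y"
    have i: "fst (m ! e) < length S" and h: "snd (m ! e) \<in> Hom (fst (Y ! e)) (fst (S ! fst (m ! e)))" using me[OF e] by auto
    have "zip (Pf e) (map snd (r2 e)) \<in> K (fst (Y ! e))"
      using rK obS[OF i] obY[OF e] h RK i pbk e unfolding resc_def by blast
    thus "R' ! e \<in> K (fst (Y ! e))" using e by (simp add: R'_def)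
  qed
  have lenR: "length R = length ?S0" using lR by simp
  have sR0: "\<forall>i<length ?S0. sobj (?S0 ! i) (R ! i)" using sR by simp
  have c: "lpb (Aof R) ?Y0 (piof R) m (concat (map Pf [0..<length ?Y0])) (y1of R m r1 (length ?Y0)) (y2of r2 (length ?Y0))"
    using core[OF fS0 lenR sR0 fY0 mf lpk] .
  note C = lpbD[OF c]
  have Aty: "fobj (Aof R)" "piof R \<in> fmor (Aof R) ?S0" using Aof_typ[OF lenR sR0] by auto
  define Z' where "Z' = coprod_over Y R'"
  define X' where "X' = coprod_over S R"
  define y1 where "y1 = y1of R m r1 (length ?Y0)"
  define y2 where "y2 = y2of r2 (length ?Y0)"
  define Zo where "Zo = concat (map Pf [0..<length ?Y0])"
  have "map fst Z' = Aof R'" unfolding Z'_def by (rule coprod_fst[OF lR'])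
  also have "\<dots> = Zo" unfolding R'_def Zo_def using Aof_zip[OF lr2] by simp
  finally have Z1: "map fst Z' = Zo" .
  have "str Z' = fcomp (str Y) (piof R')" unfolding Z'_def by (rule coprod_str[OF lR'])
  also have "piof R' = y2" unfolding R'_def y2_def using piof_zip[OF lr2] by simp
  finally have Z2: "str Z' = fcomp (str Y) y2" .
  have X1: "map fst X' = Aof R" "str X' = fcomp (str S) (piof R)"
    unfolding X'_def using coprod_fst[OF lR] coprod_str[OF lR] by auto
  have sZ': "sobj V Z'" unfolding Z'_def
    using sobj_coprod[OF V sY lR'] R'K okcD[OF oK obY] by blast
  have sX': "sobj V X'" unfolding X'_def using sobj_coprod[OF V sS lR sR] .
  have fZo: "fobj Zo" using C(1) Zo_def by simp
  have y1f: "y1 \<in> fmor Zo (Aof R)" using C(2) y1_def Zo_def by simp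
  have y2f: "y2 \<in> fmor Zo ?Y0" using C(3) y2_def Zo_def by simp
  have comm: "fcomp (piof R) y1 = fcomp m y2" using C(4) y1_def y2_def by simp
  have "fcomp (str X') y1 = fcomp (fcomp (str S) (piof R)) y1" using X1 by simp
  also have "\<dots> = fcomp (str S) (fcomp (piof R) y1)"
    using fcomp_assoc[OF fZo Aty(1) fS0 fV y1f Aty(2) str_fmor[OF sS]] by simp
  also have "\<dots> = fcomp (str S) (fcomp m y2)" using comm by simp
  also have "\<dots> = fcomp (fcomp (str S) m) y2" using fcomp_assoc[OF fZo fY0 fS0 fV y2f mf str_fmor[OF sS]] .
  also have "\<dots> = str Z'" using ms Z2 by simp
  finally have y1s: "y1 \<in> smor Z' X'" using y1f Z1 X1 smor_iff by simp
  have "siso Z' X'"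
  proof (rule iso_crit[OF V sZ' sX' y1s], intro ballI)
    fix W assume W: "W \<in> Ob"
    have mbW: "bij_betw (act m) (pts W ?Y0) (pts W ?S0)" using mb W by blast
    show "bij_betw (act y1) (pts W (map fst Z')) (pts W (map fst X'))"
      unfolding Z1 X1 bij_betw_def inj_on_def
    proof (intro conjI ballI impI equalityI subsetI)
      fix z z' assume z: "z \<in> pts W Zo" "z' \<in> pts W Zo" "act y1 z = act y1 z'"
      have v: "act (piof R) (act y1 w) = act m (act y2 w)" if "w \<in> pts W Zo" for w
        using lpb_valid[OF c Aty(1) fY0 fS0 W Aty(2) mf] that unfolding Zo_def y1_def y2_def by simp
      have p: "act y2 z \<in> pts W ?Y0" "act y2 z' \<in> pts W ?Y0" using act_pts[OF fZo fY0 W y2f] z by auto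
      have "act m (act y2 z) = act m (act y2 z')" using v z by metis
      hence eq2: "act y2 z = act y2 z'" using mbW p unfolding bij_betw_def inj_on_def by blast
      have x1: "act y1 z \<in> pts W (Aof R)" using act_pts[OF fZo Aty(1) W y1f z(1)] .
      have ex: "\<exists>!w. w \<in> pts W Zo \<and> act y1 w = act y1 z \<and> act y2 w = act y2 z"
        using C(5)[OF W x1 p(1) v[OF z(1)]] unfolding Zo_def y1_def y2_def by simp
      have a: "z \<in> pts W Zo \<and> act y1 z = act y1 z \<and> act y2 z = act y2 z" using z by simp
      have b: "z' \<in> pts W Zo \<and> act y1 z' = act y1 z \<and> act y2 z' = act y2 z" using z eq2 by simp
      show "z = z'" using ex1_uniq[OF ex a b] .
    next
      fix x assume "x \<in> act y1 ` pts W Zo"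
      thus "x \<in> pts W (Aof R)" using act_pts[OF fZo Aty(1) W y1f] by blast
    next
      fix x assume x: "x \<in> pts W (Aof R)"
      have px: "act (piof R) x \<in> pts W ?S0" using act_pts[OF Aty(1) fS0 W Aty(2) x] .
      then obtain w where w: "w \<in> pts W ?Y0" "act m w = act (piof R) x"
        using mbW unfolding bij_betw_def by (metis imageE)
      obtain z where z: "z \<in> pts W Zo" "act y1 z = x"
        using C(5)[OF W x w(1)] w(2) unfolding Zo_def y1_def y2_def by metis
      thus "x \<in> act y1 ` pts W Zo" by blast
    qed
  qed
  thus ?thesis using lR' R'K unfolding Z'_def X'_def by blast
qed

end

context ocat
begin

lemma Ind_assoc:
  assumes "W \<in> Ob" "U \<in> Ob" "V \<in> Ob" "sobj W Rr" "t \<in> Hom W U" "f \<in> Hom U V"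
  shows "Ind f (Ind t Rr) = Ind (cmp f t) Rr"
  unfolding Ind_map
proof (rule nth_equalityI)
  show "length (map (\<lambda>p. (fst p, cmp f (snd p))) (map (\<lambda>p. (fst p, cmp t (snd p))) Rr)) =
    length (map (\<lambda>p. (fst p, cmp (cmp f t) (snd p))) Rr)" by simp
  fix i assume "i < length (map (\<lambda>p. (fst p, cmp f (snd p))) (map (\<lambda>p. (fst p, cmp t (snd p))) Rr))"
  hence i: "i < length Rr" by simp
  have "fst (Rr ! i) \<in> Ob" "snd (Rr ! i) \<in> Hom (fst (Rr ! i)) W" using assms(4) i unfolding sobj_nth by auto
  hence "cmp f (cmp t (snd (Rr ! i))) = cmp (cmp f t) (snd (Rr ! i))"
    using assoc[of "fst (Rr ! i)" W U V "snd (Rr ! i)" t f] assms by blast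
  thus "map (\<lambda>p. (fst p, cmp f (snd p))) (map (\<lambda>p. (fst p, cmp t (snd p))) Rr) ! i =
    map (\<lambda>p. (fst p, cmp (cmp f t) (snd p))) Rr ! i" using i by simp
qed

lemma Ind_concat: "Ind f (concat xs) = concat (map (Ind f) xs)"
  by (induction xs) (auto simp: Ind_map)

lemma upt_cix: "[0..<(\<Sum>j<n. L j)] = concat (map (\<lambda>i. map (cix L i) [0..<L i]) [0..<n])"
proof (induction n)
  case 0 thus ?case by simp
next
  case (Suc n)
  define a where "a = (\<Sum>j<n. L j)"
  have e1: "(\<Sum>j<Suc n. L j) = a + L n" unfolding a_def by simp
  have e2: "[0..<a + L n] = [0..<a] @ [a..<a + L n]" by (rule upt_add_eq_append) simp
  have "map (cix L n) [0..<L n] = map (\<lambda>l. l + a) [0..<L n]" unfolding cix_def a_def by (simp add: add.commute)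
  also have "\<dots> = [a..<L n + a]" by (rule map_add_upt)
  finally have e3: "map (cix L n) [0..<L n] = [a..<a + L n]" by (simp add: add.commute)
  have e4: "concat (map (\<lambda>i. map (cix L i) [0..<L i]) [0..<Suc n]) =
     concat (map (\<lambda>i. map (cix L i) [0..<L i]) [0..<n]) @ map (cix L n) [0..<L n]" by simp
  show ?case unfolding e1 e2 e4 e3 using Suc.IH a_def by simp
qed

lemma coprod_nth:
  assumes "length T = length S" "i < length S" "l < length (T ! i)"
  shows "coprod_over S T ! cix (\<lambda>i. length (T ! i)) i l = (fst (T ! i ! l), cmp (snd (S ! i)) (snd (T ! i ! l)))"
  unfolding coprod_alt[OF assms(1)] using assms
  by (subst nth_concat_cix[where L="\<lambda>i. length (T ! i)"]) (auto simp: Ind_nth)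

lemma concat_map_concat: "concat (map G (concat xss)) = concat (map (\<lambda>xs. concat (map G xs)) xss)"
  by (induction xss) auto

lemma Ind_coprod: "length Ts = length S \<Longrightarrow>
   Ind f (coprod_over S Ts) = concat (map (\<lambda>l. Ind f (Ind (snd (S ! l)) (Ts ! l))) [0..<length S])"
  by (simp add: coprod_alt Ind_concat comp_def)

lemma coprod_assoc:
  assumes V: "V \<in> Ob" and sS: "sobj V S" and lT: "length T = length S"
    and sT: "\<forall>i<length S. sobj (fst (S ! i)) (T ! i)"
    and lR: "length R = length (coprod_over S T)"
    and sR: "\<forall>e<length R. sobj (fst (coprod_over S T ! e)) (R ! e)"
  shows "coprod_over (coprod_over S T) R =
    coprod_over S (map (\<lambda>i. coprod_over (T ! i) (map (\<lambda>l. R ! cix (\<lambda>i. length (T ! i)) i l) [0..<length (T ! i)])) [0..<length S])"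
proof -
  define L where "L = (\<lambda>i. length (T ! i))"
  define X where "X = coprod_over S T"
  define n where "n = length S"
  define G where "G = (\<lambda>e. Ind (snd (X ! e)) (R ! e))"
  have lX: "length X = (\<Sum>j<n. L j)" unfolding X_def L_def n_def using coprod_len[OF lT] lT by simp
  have "coprod_over X R = concat (map G [0..<(\<Sum>j<n. L j)])"
    unfolding G_def using coprod_alt[of R X] lR lX X_def by simp
  also have "\<dots> = concat (map (\<lambda>i. concat (map (\<lambda>l. G (cix L i l)) [0..<L i])) [0..<n])"
    unfolding upt_cix concat_map_concat by (simp add: comp_def)
  also have "\<dots> = coprod_over S (map (\<lambda>i. coprod_over (T ! i) (map (\<lambda>l. R ! cix L i l) [0..<L i])) [0..<n])"
  proof -
    have blk: "concat (map (\<lambda>l. G (cix L i l)) [0..<L i]) =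
       Ind (snd (S ! i)) (coprod_over (T ! i) (map (\<lambda>l. R ! cix L i l) [0..<L i]))" if i: "i < n" for i
    proof -
      have obi: "fst (S ! i) \<in> Ob" "snd (S ! i) \<in> Hom (fst (S ! i)) V" using sS i unfolding sobj_nth n_def by auto
      have "Ind (snd (S ! i)) (coprod_over (T ! i) (map (\<lambda>l. R ! cix L i l) [0..<L i]))
          = concat (map (\<lambda>l. Ind (snd (S ! i)) (Ind (snd (T ! i ! l)) (R ! cix L i l))) [0..<L i])"
      proof -
        have ll: "length (map (\<lambda>l. R ! cix L i l) [0..<L i]) = length (T ! i)" by (simp add: L_def)
        have "Ind (snd (S ! i)) (coprod_over (T ! i) (map (\<lambda>l. R ! cix L i l) [0..<L i]))
          = concat (map (\<lambda>l. Ind (snd (S ! i)) (Ind (snd (T ! i ! l)) (map (\<lambda>l. R ! cix L i l) [0..<L i] ! l))) [0..<length (T ! i)])"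
          using Ind_coprod[OF ll] .
        also have "\<dots> = concat (map (\<lambda>l. Ind (snd (S ! i)) (Ind (snd (T ! i ! l)) (R ! cix L i l))) [0..<L i])"
          by (intro arg_cong[where f=concat] map_cong) (auto simp: L_def)
        finally show ?thesis .
      qed
      also have "\<dots> = concat (map (\<lambda>l. G (cix L i l)) [0..<L i])"
      proof (intro arg_cong[where f=concat] map_cong refl)
        fix l assume "l \<in> set [0..<L i]"
        hence l: "l < L i" by simp
        have Xe: "X ! cix L i l = (fst (T ! i ! l), cmp (snd (S ! i)) (snd (T ! i ! l)))"
          unfolding X_def L_def using coprod_nth[OF lT] i l n_def L_def by simp
        have ob2: "fst (T ! i ! l) \<in> Ob" "snd (T ! i ! l) \<in> Hom (fst (T ! i ! l)) (fst (S ! i))"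
          using sT i l unfolding sobj_nth n_def L_def by auto
        have ce: "cix L i l < length R" using cix_bound[of i n l L] i l lX lR X_def by simp
        have "sobj (fst (X ! cix L i l)) (R ! cix L i l)" using sR ce X_def by simp
        hence sRe: "sobj (fst (T ! i ! l)) (R ! cix L i l)" using Xe by simp
        show "Ind (snd (S ! i)) (Ind (snd (T ! i ! l)) (R ! cix L i l)) = G (cix L i l)"
          unfolding G_def Xe using Ind_assoc[OF ob2(1) obi(1) V sRe ob2(2) obi(2)] by simp
      qed
      finally show ?thesis by simp
    qed
    define M where "M = map (\<lambda>i. coprod_over (T ! i) (map (\<lambda>l. R ! cix L i l) [0..<L i])) [0..<n]"
    have A: "map (\<lambda>i. concat (map (\<lambda>l. G (cix L i l)) [0..<L i])) [0..<n] =
        map (\<lambda>i. Ind (snd (S ! i)) (coprod_over (T ! i) (map (\<lambda>l. R ! cix L i l) [0..<L i]))) [0..<n]"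
      by (rule map_cong) (auto simp: blk)
    have ll2: "length M = length S" by (simp add: n_def M_def)
    have B: "map (\<lambda>i. Ind (snd (S ! i)) (M ! i)) [0..<length S]
        = map (\<lambda>i. Ind (snd (S ! i)) (coprod_over (T ! i) (map (\<lambda>l. R ! cix L i l) [0..<L i]))) [0..<n]"
      by (rule map_cong) (auto simp: n_def M_def)
    have "coprod_over S M = concat (map (\<lambda>i. Ind (snd (S ! i)) (M ! i)) [0..<length S])" by (rule coprod_alt[OF ll2])
    also have "\<dots> = concat (map (\<lambda>i. concat (map (\<lambda>l. G (cix L i l)) [0..<L i])) [0..<n])"
      by (simp only: A B)
    finally show ?thesis unfolding M_def by (rule sym)
  qed
  finally show ?thesis unfolding X_def L_def n_def .
qed

end

context ocat
begin

definition Gp :: "('o \<Rightarrow> ('o \<times> 'm) list set) \<Rightarrow> 'o \<Rightarrow> ('o \<times> 'm) list \<Rightarrow> bool" where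
  "Gp J V S \<longleftrightarrow> (\<forall>R. length R = length S \<and> (\<forall>i<length S. R ! i \<in> J (fst (S ! i))) \<longrightarrow> coprod_over S R \<in> J V)"

lemma step_Gp:
  assumes oJ: "okc J" and iJ: "isoc J" and rJ: "resc J" and oCc: "okc Cc"
    and base: "\<forall>V\<in>Ob. \<forall>S\<in>Cc V. Gp J V S"
    and EJ: "\<forall>V. E V \<subseteq> J V" and EG: "\<forall>V\<in>Ob. \<forall>T\<in>E V. Gp J V T"
    and V: "V \<in> Ob" and X: "X \<in> Cl_step Cc E V"
  shows "Gp J V X"
  unfolding Gp_def
proof (intro allI impI)
  fix R assume RR: "length R = length X \<and> (\<forall>i<length X. R ! i \<in> J (fst (X ! i)))"
  obtain S' T' where sX: "sobj V X" and S'C: "S' \<in> Cc V" and lT: "length T' = length S'"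
    and TE: "\<forall>i<length S'. T' ! i \<in> E (fst (S' ! i))" and iso: "siso (coprod_over S' T') X"
    using Cl_stepE[OF X] by metis
  have sS': "sobj V S'" using okcD[OF oCc V S'C] .
  have obS: "i < length S' \<Longrightarrow> fst (S' ! i) \<in> Ob" for i using sS' unfolding sobj_nth by auto
  have sT: "\<forall>i<length S'. sobj (fst (S' ! i)) (T' ! i)" using TE EJ okcD[OF oJ obS] by blast
  define Y where "Y = coprod_over S' T'"
  have sY: "sobj V Y" unfolding Y_def using sobj_coprod[OF V sS' lT sT] .
  obtain R' where lR': "length R' = length Y" and R'J: "\<forall>e<length Y. R' ! e \<in> J (fst (Y ! e))"
    and iso2: "siso (coprod_over Y R') (coprod_over X R)"
    using transport[OF oJ rJ V sX sY iso[folded Y_def]] RR by blast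
  have obY: "e < length Y \<Longrightarrow> fst (Y ! e) \<in> Ob" for e using sY unfolding sobj_nth by auto
  have sR': "\<forall>e<length R'. sobj (fst (Y ! e)) (R' ! e)" using R'J lR' okcD[OF oJ obY] by auto
  define L where "L = (\<lambda>i. length (T' ! i))"
  define Rs where "Rs = map (\<lambda>i. coprod_over (T' ! i) (map (\<lambda>l. R' ! cix L i l) [0..<L i])) [0..<length S']"
  have ass: "coprod_over Y R' = coprod_over S' Rs"
    unfolding Y_def Rs_def L_def using coprod_assoc[OF V sS' lT sT] lR' sR' Y_def by simp
  have lY: "length Y = (\<Sum>j<length S'. L j)" unfolding Y_def L_def using coprod_len[OF lT] lT by simp
  have RsJ: "\<forall>i<length S'. Rs ! i \<in> J (fst (S' ! i))"
  proof (intro allI impI)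
    fix i assume i: "i < length S'"
    have G: "Gp J (fst (S' ! i)) (T' ! i)" using EG obS[OF i] TE i by blast
    have "\<forall>l<length (T' ! i). R' ! cix L i l \<in> J (fst (T' ! i ! l))"
    proof (intro allI impI)
      fix l assume l: "l < length (T' ! i)"
      have c: "cix L i l < length Y" using lY cix_bound[of i "length S'" l L] i l L_def by simp
      have "fst (Y ! cix L i l) = fst (T' ! i ! l)" unfolding Y_def L_def using coprod_nth[OF lT i l] by simp
      thus "R' ! cix L i l \<in> J (fst (T' ! i ! l))" using R'J c by metis
    qed
    hence "coprod_over (T' ! i) (map (\<lambda>l. R' ! cix L i l) [0..<L i]) \<in> J (fst (S' ! i))"
      using G unfolding Gp_def L_def by simp
    thus "Rs ! i \<in> J (fst (S' ! i))" using i by (simp add: Rs_def)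
  qed
  have "coprod_over S' Rs \<in> J V" using base V S'C RsJ unfolding Gp_def by (simp add: Rs_def)
  hence inY: "coprod_over Y R' \<in> J V" using ass by simp
  have obX: "i < length X \<Longrightarrow> fst (X ! i) \<in> Ob" for i using sX unfolding sobj_nth by auto
  have "sobj V (coprod_over X R)"
    using sobj_coprod[OF V sX] RR okcD[OF oJ obX] by blast
  thus "coprod_over X R \<in> J V" using iJ V inY iso2 unfolding isoc_def by blast
qed

lemma okc_Cl_step: "okc (Cl_step C E)"
  unfolding okc_def Cl_step_def by auto

lemma isoc_Cl_step:
  assumes oC: "okc C" and oE: "okc E"
  shows "isoc (Cl_step C E)"
  unfolding isoc_def
proof (intro ballI allI impI)
  fix V X X' assume V: "V \<in> Ob" and h: "X \<in> Cl_step C E V \<and> sobj V X' \<and> siso X X'"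
  obtain S Ts where sX: "sobj V X" and SC: "S \<in> C V" and lT: "length Ts = length S"
    and TE: "\<forall>i<length S. Ts ! i \<in> E (fst (S ! i))" and iso: "siso (coprod_over S Ts) X"
    using Cl_stepE[of X C E V] h by metis
  have sS: "sobj V S" using okcD[OF oC V SC] .
  have obS: "i < length S \<Longrightarrow> fst (S ! i) \<in> Ob" for i using sS unfolding sobj_nth by auto
  have sT: "\<forall>i<length S. sobj (fst (S ! i)) (Ts ! i)" using TE okcD[OF oE obS] by blast
  have "siso (coprod_over S Ts) X'"
    using siso_trans[OF V sobj_coprod[OF V sS lT sT] sX _ iso] h by blast
  thus "X' \<in> Cl_step C E V" using Cl_stepI[of V X' S C Ts E] V h SC lT TE by blast
qed

lemma okc_UN: "(\<And>n. okc (K n)) \<Longrightarrow> okc (\<lambda>V. \<Union>n. K n V)"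
  unfolding okc_def by auto
lemma isoc_UN:
  assumes "\<And>n. isoc (K n)" shows "isoc (\<lambda>V. \<Union>n. K n V)"
  unfolding isoc_def
proof (intro ballI allI impI)
  fix V S S' assume V: "V \<in> Ob" and h: "S \<in> (\<Union>n. K n V) \<and> sobj V S' \<and> siso S S'"
  then obtain n where "S \<in> K n V" by blast
  hence "S' \<in> K n V" using assms[of n] V h unfolding isoc_def by blast
  thus "S' \<in> (\<Union>n. K n V)" by blast
qed
lemma resc_UN:
  assumes "\<And>n. resc (K n)" shows "resc (\<lambda>V. \<Union>n. K n V)"
  unfolding resc_def
proof (intro ballI allI impI)
  fix V U a S P p1 p2 assume V: "V \<in> Ob" and U: "U \<in> Ob" and a: "a \<in> Hom U V" and S: "S \<in> (\<Union>n. K n V)"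
    and pb: "is_pullback (map fst S) [U] (str S) [(0, a)] P p1 p2"
  then obtain n where "S \<in> K n V" by blast
  hence "zip P (map snd p2) \<in> K n U" using assms[of n] V U a pb unfolding resc_def by blast
  thus "zip P (map snd p2) \<in> (\<Union>n. K n U)" by blast
qed
lemma okc_Un: "okc K1 \<Longrightarrow> okc K2 \<Longrightarrow> okc (\<lambda>V. K1 V \<union> K2 V)"
  unfolding okc_def by auto
lemma isoc_Un:
  assumes "isoc K1" "isoc K2" shows "isoc (\<lambda>V. K1 V \<union> K2 V)"
  unfolding isoc_def
proof (intro ballI allI impI)
  fix V S S' assume V: "V \<in> Ob" and h: "S \<in> K1 V \<union> K2 V \<and> sobj V S' \<and> siso S S'"
  show "S' \<in> K1 V \<union> K2 V"
  proof (cases "S \<in> K1 V")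
    case True thus ?thesis using assms(1) V h unfolding isoc_def by blast
  next
    case False hence "S \<in> K2 V" using h by blast
    thus ?thesis using assms(2) V h unfolding isoc_def by blast
  qed
qed
lemma resc_Un:
  assumes "resc K1" "resc K2" shows "resc (\<lambda>V. K1 V \<union> K2 V)"
  unfolding resc_def
proof (intro ballI allI impI)
  fix V U a S P p1 p2 assume V: "V \<in> Ob" and U: "U \<in> Ob" and a: "a \<in> Hom U V" and S: "S \<in> K1 V \<union> K2 V"
    and pb: "is_pullback (map fst S) [U] (str S) [(0, a)] P p1 p2"
  show "zip P (map snd p2) \<in> K1 U \<union> K2 U"
  proof (cases "S \<in> K1 V")
    case True thus ?thesis using assms(1) V U a pb unfolding resc_def by blast
  next
    case False hence "S \<in> K2 V" using S by blast
    thus ?thesis using assms(2) V U a pb unfolding resc_def by blast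
  qed
qed

lemma Cl_n_props:
  assumes "okc C" "resc C" "okc E" "isoc E" "resc E"
  shows "okc (Cl_n C k E) \<and> isoc (Cl_n C k E) \<and> resc (Cl_n C k E)"
proof (induction k)
  case 0 thus ?case using assms by simp
next
  case (Suc k)
  thus ?case using okc_Cl_step isoc_Cl_step res_Cl_step assms by simp
qed

lemma Cl_hat_eq: "Cl_hat C E = (\<lambda>V. E V \<union> (\<Union>n. Cl_n C n E V))"
  by (rule ext) (simp add: Cl_hat_def Cl_def)

lemma Cl_hat_props:
  assumes "okc C" "resc C" "okc E" "isoc E" "resc E"
  shows "okc (Cl_hat C E) \<and> isoc (Cl_hat C E) \<and> resc (Cl_hat C E)"
proof -
  have a: "okc (\<lambda>V. \<Union>n. Cl_n C n E V)" "isoc (\<lambda>V. \<Union>n. Cl_n C n E V)" "resc (\<lambda>V. \<Union>n. Cl_n C n E V)"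
    using okc_UN[of "\<lambda>n. Cl_n C n E"] isoc_UN[of "\<lambda>n. Cl_n C n E"] resc_UN[of "\<lambda>n. Cl_n C n E"]
      Cl_n_props[OF assms] by auto
  show ?thesis unfolding Cl_hat_eq
    using okc_Un[OF assms(3) a(1)] isoc_Un[OF assms(4) a(2)] resc_Un[OF assms(5) a(3)] by simp
qed

end

context ocat
begin

lemma meet_main:
  assumes wC: "is_wIndSys C" and wD: "is_wIndSys D"
  shows "is_wIndSys (\<lambda>V. C V \<inter> D V) \<and> (\<lambda>V. C V \<inter> D V) \<le> C \<and> (\<lambda>V. C V \<inter> D V) \<le> D
       \<and> (\<forall>E. is_wIndSys E \<and> E \<le> C \<and> E \<le> D \<longrightarrow> E \<le> (\<lambda>V. C V \<inter> D V))"
proof -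
  have c: "okc C" "isoc C" "resc C" "termc C" "coprc C" using wC wis_iff by auto
  have d: "okc D" "isoc D" "resc D" "termc D" "coprc D" using wD wis_iff by auto
  have "okc (\<lambda>V. C V \<inter> D V)" using c(1) unfolding okc_def by auto
  moreover have "isoc (\<lambda>V. C V \<inter> D V)"
    unfolding isoc_def
  proof (intro ballI allI impI)
    fix V S S' assume "V \<in> Ob" "S \<in> C V \<inter> D V \<and> sobj V S' \<and> siso S S'"
    thus "S' \<in> C V \<inter> D V" using c(2) d(2) unfolding isoc_def by blast
  qed
  moreover have "resc (\<lambda>V. C V \<inter> D V)"
    unfolding resc_def
  proof (intro ballI allI impI)
    fix V U a S P p1 p2 assume "V \<in> Ob" "U \<in> Ob" "a \<in> Hom U V" "S \<in> C V \<inter> D V"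
      "is_pullback (map fst S) [U] (str S) [(0, a)] P p1 p2"
    thus "zip P (map snd p2) \<in> C U \<inter> D U" using c(3) d(3) unfolding resc_def by blast
  qed
  moreover have "termc (\<lambda>V. C V \<inter> D V)" using c(4) d(4) unfolding termc_def by blast
  moreover have "coprc (\<lambda>V. C V \<inter> D V)"
    unfolding coprc_def
  proof (intro ballI allI impI)
    fix V S Ts assume "V \<in> Ob" "S \<in> C V \<inter> D V"
      "length Ts = length S \<and> (\<forall>i<length S. Ts ! i \<in> C (fst (S ! i)) \<inter> D (fst (S ! i)))"
    thus "coprod_over S Ts \<in> C V \<inter> D V" using c(5) d(5) unfolding coprc_def by auto
  qed
  ultimately show ?thesis using wis_iff by (auto simp: le_fun_def)
qed

lemma ne_Cl_n: "Cl_n Cc k E V \<noteq> {} \<Longrightarrow> E V \<noteq> {} \<or> Cc V \<noteq> {}"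
proof (induction k)
  case 0 thus ?case by simp
next
  case (Suc k)
  then obtain X where "X \<in> Cl_step Cc (Cl_n Cc k E) V" by auto
  then obtain S where "S \<in> Cc V" using Cl_stepE by metis
  thus ?case by blast
qed

lemma ne_Cl_hat: "Cl_hat Cc E V \<noteq> {} \<Longrightarrow> E V \<noteq> {} \<or> Cc V \<noteq> {}"
  unfolding Cl_hat_def Cl_def using ne_Cl_n by blast

lemma Cl_n_sub:
  assumes iE: "isoc E" and cE: "coprc E" and CcE: "\<forall>V. Cc V \<subseteq> E V" and E'E: "\<forall>V. E' V \<subseteq> E V"
  shows "Cl_n Cc k E' V \<subseteq> E V"
proof (induction k arbitrary: V)
  case 0 thus ?case using E'E by simp
next
  case (Suc k)
  show ?case
  proof
    fix X assume "X \<in> Cl_n Cc (Suc k) E' V"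
    hence X: "X \<in> Cl_step Cc (Cl_n Cc k E') V" by simp
    obtain S Ts where V: "V \<in> Ob" and sX: "sobj V X" and SC: "S \<in> Cc V" and lT: "length Ts = length S"
      and TE: "\<forall>i<length S. Ts ! i \<in> Cl_n Cc k E' (fst (S ! i))" and iso: "siso (coprod_over S Ts) X"
      using Cl_stepE[OF X] by metis
    have "coprod_over S Ts \<in> E V"
      using cE V SC CcE lT TE Suc.IH unfolding coprc_def by blast
    thus "X \<in> E V" using iE V sX iso unfolding isoc_def by blast
  qed
qed

lemma Cl_hat_sub:
  assumes "isoc E" "coprc E" "\<forall>V. Cc V \<subseteq> E V" "\<forall>V. E' V \<subseteq> E V"
  shows "Cl_hat Cc E' V \<subseteq> E V"
  unfolding Cl_hat_def Cl_def using Cl_n_sub[OF assms] assms(4) by blast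

lemma Gp_Cl_hat:
  assumes oJ: "okc J" and iJ: "isoc J" and rJ: "resc J" and oCc: "okc Cc"
    and base: "\<forall>V\<in>Ob. \<forall>S\<in>Cc V. Gp J V S"
    and EJ: "\<forall>V. E V \<subseteq> J V" and EG: "\<forall>V\<in>Ob. \<forall>T\<in>E V. Gp J V T"
    and ClJ: "\<forall>k V. Cl_n Cc k E V \<subseteq> J V"
  shows "\<forall>V\<in>Ob. \<forall>S\<in>Cl_hat Cc E V. Gp J V S"
proof -
  have "\<forall>V\<in>Ob. \<forall>S\<in>Cl_n Cc k E V. Gp J V S" for k
  proof (induction k)
    case 0 thus ?case using EG by simp
  next
    case (Suc k)
    show ?case
    proof (intro ballI)
      fix V S assume V: "V \<in> Ob" and S: "S \<in> Cl_n Cc (Suc k) E V"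
      show "Gp J V S"
        using step_Gp[OF oJ iJ rJ oCc base _ Suc.IH V, of S] ClJ S by simp
    qed
  qed
  thus ?thesis unfolding Cl_hat_def Cl_def using EG by blast
qed

end

context ocat
begin

lemma join_main:
  assumes wC: "is_wIndSys C" and wD: "is_wIndSys D"
  shows "is_wIndSys (join_formula C D) \<and> C \<le> join_formula C D \<and> D \<le> join_formula C D
       \<and> (\<forall>E. is_wIndSys E \<and> C \<le> E \<and> D \<le> E \<longrightarrow> join_formula C D \<le> E)"
proof -
  have c: "okc C" "isoc C" "resc C" "termc C" "coprc C" using wC wis_iff by auto
  have d: "okc D" "isoc D" "resc D" "termc D" "coprc D" using wD wis_iff by auto
  define F where "F = (\<lambda>E. Cl_hat C (Cl_hat D E))"
  define Fn where "Fn = (\<lambda>n. (F ^^ n) (\<lambda>W. C W \<union> D W))"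
  define J where "J = join_formula C D"
  have Jeq: "J = (\<lambda>V. \<Union>n. Fn n V)" unfolding J_def Fn_def F_def by (rule ext) (simp add: join_formula_def)
  have Fn0: "Fn 0 = (\<lambda>W. C W \<union> D W)" unfolding Fn_def by simp
  have FnS: "Fn (Suc n) = Cl_hat C (Cl_hat D (Fn n))" for n unfolding Fn_def F_def by simp
  have props: "okc (Fn n) \<and> isoc (Fn n) \<and> resc (Fn n)" for n
  proof (induction n)
    case 0 thus ?case unfolding Fn0 using okc_Un isoc_Un resc_Un c d by simp
  next
    case (Suc n)
    have "okc (Cl_hat D (Fn n)) \<and> isoc (Cl_hat D (Fn n)) \<and> resc (Cl_hat D (Fn n))"
      using Cl_hat_props d Suc by simp
    thus ?case unfolding FnS using Cl_hat_props c by simp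
  qed
  have oJ: "okc J" unfolding Jeq by (rule okc_UN) (use props in blast)
  have iJ: "isoc J" unfolding Jeq by (rule isoc_UN) (use props in blast)
  have rJ: "resc J" unfolding Jeq by (rule resc_UN) (use props in blast)
  have hatsub: "E V \<subseteq> Cl_hat Cc E V" for Cc E V by (simp add: Cl_hat_def)
  have Cl_n_hat: "Cl_n Cc k E V \<subseteq> Cl_hat Cc E V" for Cc k E V unfolding Cl_hat_def Cl_def by blast
  have step: "Fn n V \<subseteq> Fn (Suc n) V" for n V unfolding FnS using hatsub by blast
  have mono: "m \<le> n \<Longrightarrow> Fn m V \<subseteq> Fn n V" for m n V
    by (rule lift_Suc_mono_le[of "\<lambda>n. Fn n V"]) (use step in auto)
  have FnJ: "Fn n V \<subseteq> J V" for n V unfolding Jeq by blast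
  have lev: "\<exists>N. \<forall>i<length S. R ! i \<in> Fn N (fst (S ! i))"
    if "\<forall>i<length S. R ! i \<in> J (fst (S ! i))" for R S
  proof -
    have "\<forall>i. \<exists>n. i < length S \<longrightarrow> R ! i \<in> Fn n (fst (S ! i))" using that unfolding Jeq by blast
    then obtain f where f: "\<forall>i. i < length S \<longrightarrow> R ! i \<in> Fn (f i) (fst (S ! i))" by metis
    have "\<forall>i<length S. R ! i \<in> Fn (\<Sum>j<length S. f j) (fst (S ! i))"
    proof (intro allI impI)
      fix i assume i: "i < length S"
      have "f i \<le> (\<Sum>j<length S. f j)" using i by (intro member_le_sum) auto
      thus "R ! i \<in> Fn (\<Sum>j<length S. f j) (fst (S ! i))" using mono f i by blast
    qed
    thus ?thesis by blast
  qed
  have sobjJ: "V \<in> Ob \<Longrightarrow> S \<in> C V \<union> D V \<Longrightarrow> length R = length S \<Longrightarrow> \<forall>i<length S. R ! i \<in> J (fst (S ! i))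
      \<Longrightarrow> sobj V (coprod_over S R)" for V S R
  proof -
    assume V: "V \<in> Ob" and S: "S \<in> C V \<union> D V" and l: "length R = length S" and R: "\<forall>i<length S. R ! i \<in> J (fst (S ! i))"
    have sS: "sobj V S" using S okcD[OF c(1) V] okcD[OF d(1) V] by blast
    have "\<forall>i<length S. sobj (fst (S ! i)) (R ! i)"
      using R okcD[OF oJ] sS unfolding sobj_nth by blast
    thus ?thesis using sobj_coprod[OF V sS l] by blast
  qed
  have baseC: "\<forall>V\<in>Ob. \<forall>S\<in>C V. Gp J V S" unfolding Gp_def
  proof (intro ballI allI impI)
    fix V S R assume V: "V \<in> Ob" and S: "S \<in> C V" and R: "length R = length S \<and> (\<forall>i<length S. R ! i \<in> J (fst (S ! i)))"
    obtain N where N: "\<forall>i<length S. R ! i \<in> Fn N (fst (S ! i))" using lev R by blast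
    have sc: "sobj V (coprod_over S R)" using sobjJ V S R by blast
    have "\<forall>i<length S. R ! i \<in> Cl_hat D (Fn N) (fst (S ! i))" using N hatsub by blast
    hence "coprod_over S R \<in> Cl_step C (Cl_hat D (Fn N)) V"
      using Cl_stepI[of V "coprod_over S R" S C R "Cl_hat D (Fn N)", OF V sc S] R siso_refl[OF V sc] by blast
    hence "coprod_over S R \<in> Cl_n C 1 (Cl_hat D (Fn N)) V" by simp
    hence "coprod_over S R \<in> Fn (Suc N) V" unfolding FnS using Cl_n_hat by blast
    thus "coprod_over S R \<in> J V" using FnJ by blast
  qed
  have baseD: "\<forall>V\<in>Ob. \<forall>S\<in>D V. Gp J V S" unfolding Gp_def
  proof (intro ballI allI impI)
    fix V S R assume V: "V \<in> Ob" and S: "S \<in> D V" and R: "length R = length S \<and> (\<forall>i<length S. R ! i \<in> J (fst (S ! i)))"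
    obtain N where N: "\<forall>i<length S. R ! i \<in> Fn N (fst (S ! i))" using lev R by blast
    have sc: "sobj V (coprod_over S R)" using sobjJ V S R by blast
    have "coprod_over S R \<in> Cl_step D (Fn N) V"
      using Cl_stepI[of V "coprod_over S R" S D R "Fn N", OF V sc S] R N siso_refl[OF V sc] by blast
    hence "coprod_over S R \<in> Cl_n D 1 (Fn N) V" by simp
    hence "coprod_over S R \<in> Cl_hat D (Fn N) V" using Cl_n_hat by blast
    hence "coprod_over S R \<in> Fn (Suc N) V" unfolding FnS using hatsub by blast
    thus "coprod_over S R \<in> J V" using FnJ by blast
  qed
  have allG: "\<forall>V\<in>Ob. \<forall>S\<in>Fn n V. Gp J V S" for n
  proof (induction n)
    case 0 thus ?case unfolding Fn0 using baseC baseD by blast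
  next
    case (Suc n)
    have subD: "\<forall>k V. Cl_n D k (Fn n) V \<subseteq> J V"
      using Cl_n_hat hatsub FnJ FnS by (metis subset_trans)
    have GD: "\<forall>V\<in>Ob. \<forall>S\<in>Cl_hat D (Fn n) V. Gp J V S"
      using Gp_Cl_hat[OF oJ iJ rJ d(1) baseD _ Suc.IH subD] FnJ by blast
    have EJ: "\<forall>V. Cl_hat D (Fn n) V \<subseteq> J V" using FnJ FnS hatsub by (metis subset_trans)
    have subC: "\<forall>k V. Cl_n C k (Cl_hat D (Fn n)) V \<subseteq> J V"
      using Cl_n_hat FnJ FnS by (metis subset_trans)
    show ?case unfolding FnS using Gp_Cl_hat[OF oJ iJ rJ c(1) baseC EJ GD subC] .
  qed
  have cJ: "coprc J" unfolding coprc_def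
  proof (intro ballI allI impI)
    fix V S Ts assume V: "V \<in> Ob" and S: "S \<in> J V" and T: "length Ts = length S \<and> (\<forall>i<length S. Ts ! i \<in> J (fst (S ! i)))"
    obtain n where "S \<in> Fn n V" using S unfolding Jeq by blast
    thus "coprod_over S Ts \<in> J V" using allG V T unfolding Gp_def by blast
  qed
  have neFn: "Fn n V \<noteq> {} \<Longrightarrow> C V \<noteq> {} \<or> D V \<noteq> {}" for n V
  proof (induction n)
    case 0 thus ?case unfolding Fn0 by blast
  next
    case (Suc n) thus ?case unfolding FnS using ne_Cl_hat by metis
  qed
  have tJ: "termc J" unfolding termc_def
  proof (intro ballI impI)
    fix V assume V: "V \<in> Ob" and ne: "J V \<noteq> {}"
    then obtain n where "Fn n V \<noteq> {}" unfolding Jeq by blast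
    hence "C V \<noteq> {} \<or> D V \<noteq> {}" using neFn by blast
    hence "terminal V \<in> C V \<union> D V" using c(4) d(4) V unfolding termc_def by blast
    hence "terminal V \<in> Fn 0 V" unfolding Fn0 .
    thus "terminal V \<in> J V" using FnJ by blast
  qed
  have wJ: "is_wIndSys J" using wis_iff oJ iJ rJ tJ cJ by blast
  have CJ: "C \<le> J" unfolding le_fun_def
  proof (intro allI subsetI)
    fix V x assume "x \<in> C V" hence "x \<in> Fn 0 V" unfolding Fn0 by blast
    thus "x \<in> J V" using FnJ by blast
  qed
  have DJ: "D \<le> J" unfolding le_fun_def
  proof (intro allI subsetI)
    fix V x assume "x \<in> D V" hence "x \<in> Fn 0 V" unfolding Fn0 by blast
    thus "x \<in> J V" using FnJ by blast
  qed
  have minl: "J \<le> E" if wE: "is_wIndSys E" and CE: "C \<le> E" and DE: "D \<le> E" for E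
  proof -
    have e: "isoc E" "coprc E" using wE wis_iff by auto
    have CE': "\<forall>V. C V \<subseteq> E V" and DE': "\<forall>V. D V \<subseteq> E V" using CE DE by (auto simp: le_fun_def)
    have "\<forall>V. Fn n V \<subseteq> E V" for n
    proof (induction n)
      case 0 thus ?case unfolding Fn0 using CE' DE' by blast
    next
      case (Suc n)
      have "\<forall>V. Cl_hat D (Fn n) V \<subseteq> E V" using Cl_hat_sub[OF e DE' Suc.IH] by blast
      thus ?case unfolding FnS using Cl_hat_sub[OF e CE'] by blast
    qed
    thus ?thesis unfolding Jeq le_fun_def by blast
  qed
  show ?thesis using wJ CJ DJ minl unfolding J_def by blast
qed

end

theorem mainTheorem10:
  fixes Ob :: "'o set" and Hom :: "'o \<Rightarrow> 'o \<Rightarrow> 'm set"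
    and cmp :: "'m \<Rightarrow> 'm \<Rightarrow> 'm" and idm :: "'o \<Rightarrow> 'm"
    and C D :: "'o \<Rightarrow> ('o \<times> 'm) list set"
  assumes "category Ob Hom cmp idm"
    and "cat_data.orbital Ob Hom cmp"
    and "cat_data.is_wIndSys Ob Hom cmp idm C"
    and "cat_data.is_wIndSys Ob Hom cmp idm D"
  shows "cat_data.is_wIndSys Ob Hom cmp idm (\<lambda>V. C V \<inter> D V)
       \<and> (\<lambda>V. C V \<inter> D V) \<le> C \<and> (\<lambda>V. C V \<inter> D V) \<le> D
       \<and> (\<forall>E. cat_data.is_wIndSys Ob Hom cmp idm E \<and> E \<le> C \<and> E \<le> D
              \<longrightarrow> E \<le> (\<lambda>V. C V \<inter> D V))
       \<and> cat_data.is_wIndSys Ob Hom cmp idm (cat_data.join_formula Ob Hom cmp idm C D)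
       \<and> C \<le> cat_data.join_formula Ob Hom cmp idm C D
       \<and> D \<le> cat_data.join_formula Ob Hom cmp idm C D
       \<and> (\<forall>E. cat_data.is_wIndSys Ob Hom cmp idm E \<and> C \<le> E \<and> D \<le> E
              \<longrightarrow> cat_data.join_formula Ob Hom cmp idm C D \<le> E)"
proof -
  interpret ocat Ob Hom cmp idm
    by unfold_locales (use assms(1,2) in auto)
  show ?thesis using meet_main[OF assms(3,4)] join_main[OF assms(3,4)] by blast
qed


end
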